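(* For the hypergeometric weights described in the context, the recursion and Laguerre--Freud matrices satisfy \[ \vartheta\Psi=[\phi,\Psi]=[-T_{-},\Psi]=[\Psi,T_{-}],\qquad \vartheta\Psi^\top=\Psi^\top+[\mu,\Psi^\top]=\Psi^\top+[-T_{+}^\top,\Psi^\top]. \]
   Context: Weights on $\mathbb N_0$: $w^{(a)}(k)=\frac{(b^{(a)}_1)_k\cdots(b^{(a)}_{M^{(a)}})_k}{(c_1)_k\cdots(c_N)_k}\frac{(\eta^{(a)})^k}{k!}$, $a\in\{1,2\}$ (convergent series); they satisfy $\theta(k+1)w^{(a)}(k+1)=\sigma^{(a)}(k)w^{(a)}(k)$ with $\theta(z)=z(z+c_1-1)\cdots(z+c_N-1)$, $\sigma^{(a)}(z)=\eta^{(a)}(z+b^{(a)}_1)\cdots(z+b^{(a)}_{M^{(a)}})$. Moment matrix (indices from 0): $\mathscr M_{n,2m}=\sum_k k^{n+m}w^{(1)}(k)$, $\mathscr M_{n,2m+1}=\sum_k k^{n+m}w^{(2)}(k)$, with all leading principal minors nonzero, so $\mathscr M=S^{-1}H\tilde S^{-\top}$ ($S,\tilde S$ lower unitriangular, $H$ diagonal), all depending on $(\eta^{(1)},\eta^{(2)})$. $\Lambda$ has ones on the first superdiagonal; $T=S\Lambda S^{-1}=(\Lambda^\top)^2\gamma+\Lambda^\top\beta+\alpha+\Lambda$ with diagonal $\alpha,\beta,\gamma$; $T_-=(\Lambda^\top)^2\gamma+\Lambda^\top\beta$, $T_+=\alpha+\Lambda$. $L$ is the Pascal matrix $L_{n,m}=\binom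 nm$ ($n\ge m$), $\Pi^{-1}=SL^{-1}S^{-1}$, and $\Psi=\Pi^{-1}\theta(T)$. $\vartheta^{(a)}=\eta^{(a)}\partial/\partial\eta^{(a)}$, $\vartheta=\vartheta^{(1)}+\vartheta^{(2)}$; $\phi=(\vartheta S)S^{-1}$; $\tilde\phi^{(a)}=(\vartheta^{(a)}\tilde S)\tilde S^{-1}$; $\mu^{(a)}=(\vartheta^{(a)}H^{-1})H+H^{-1}\tilde\phi^{(a)}H$, $\mu=\mu^{(1)}+\mu^{(2)}$. $[X,Y]=XY-YX$. *)

theory Defs
  imports "HOL-Analysis.Analysis"
begin

type_synonym rmat = "nat \<Rightarrow> nat \<Rightarrow> real"

text \<open>Matrix product; all products occurring in the statement have finitely
  many nonzero terms, in which case the infinite sum is the finite sum.\<close>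
definition mmult :: "rmat \<Rightarrow> rmat \<Rightarrow> rmat" where
  "mmult A B = (\<lambda>i j. infsum (\<lambda>k. A i k * B k j) UNIV)"

definition madd :: "rmat \<Rightarrow> rmat \<Rightarrow> rmat" where
  "madd A B = (\<lambda>i j. A i j + B i j)"

definition mneg :: "rmat \<Rightarrow> rmat" where
  "mneg A = (\<lambda>i j. - A i j)"

definition msub :: "rmat \<Rightarrow> rmat \<Rightarrow> rmat" where
  "msub A B = (\<lambda>i j. A i j - B i j)"

definition mscale :: "real \<Rightarrow> rmat \<Rightarrow> rmat" where
  "mscale c A = (\<lambda>i j. c * A i j)"

definition mtrans :: "rmat \<Rightarrow> rmat" where
  "mtrans A = (\<lambda>i j. A j i)"

definition idm :: rmat where
  "idm = (\<lambda>i j. if i = j then 1 else 0)"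

definition comm :: "rmat \<Rightarrow> rmat \<Rightarrow> rmat" where
  "comm X Y = msub (mmult X Y) (mmult Y X)"

definition lower_tri :: "rmat \<Rightarrow> bool" where
  "lower_tri A \<longleftrightarrow> (\<forall>i j. i < j \<longrightarrow> A i j = 0)"

definition lower_unitri :: "rmat \<Rightarrow> bool" where
  "lower_unitri A \<longleftrightarrow> lower_tri A \<and> (\<forall>i. A i i = 1)"

definition diagonal :: "rmat \<Rightarrow> bool" where
  "diagonal A \<longleftrightarrow> (\<forall>i j. i \<noteq> j \<longrightarrow> A i j = 0)"

definition ltinv :: "rmat \<Rightarrow> rmat" where
  "ltinv A = (THE X. lower_tri X \<and> mmult A X = idm \<and> mmult X A = idm)"

definition Lam :: rmat where
  "Lam = (\<lambda>i j. if j = Suc i then 1 else 0)"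

definition pascal :: rmat where
  "pascal = (\<lambda>n m. real (n choose m))"

definition lead_minor :: "rmat \<Rightarrow> nat \<Rightarrow> real" where
  "lead_minor A n = (\<Sum>p | p permutes {..<n}. of_int (sign p) * (\<Prod>i<n. A i (p i)))"

definition hweight :: "nat \<Rightarrow> (nat \<Rightarrow> real) \<Rightarrow> nat \<Rightarrow> (nat \<Rightarrow> real) \<Rightarrow> real \<Rightarrow> nat \<Rightarrow> real" where
  "hweight M b N c eta k =
     (\<Prod>j<M. pochhammer (b j) k) / (\<Prod>j<N. pochhammer (c j) k) * eta ^ k / fact k"

definition moment :: "(nat \<Rightarrow> real) \<Rightarrow> (nat \<Rightarrow> real) \<Rightarrow> rmat" where
  "moment w1 w2 = (\<lambda>n m. if even m then (\<Sum>k. real k ^ (n + m div 2) * w1 k)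
                                     else (\<Sum>k. real k ^ (n + m div 2) * w2 k))"

fun theta_mat :: "(nat \<Rightarrow> real) \<Rightarrow> nat \<Rightarrow> rmat \<Rightarrow> rmat" where
  "theta_mat c 0 T = T"
| "theta_mat c (Suc n) T = mmult (theta_mat c n T) (madd T (mscale (c n - 1) idm))"

text \<open>Since T = (\<Lambda>^T)^2 \<gamma> + \<Lambda>^T \<beta> + \<alpha> + \<Lambda>, these are
  T_- = (\<Lambda>^T)^2\<gamma> + \<Lambda>^T\<beta> and T_+ = \<alpha> + \<Lambda>.\<close>
definition lowpart :: "rmat \<Rightarrow> rmat" where
  "lowpart T = (\<lambda>i j. if j < i then T i j else 0)"

definition uppart :: "rmat \<Rightarrow> rmat" where
  "uppart T = (\<lambda>i j. if i \<le> j then T i j else 0)"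

definition vth1 :: "(real \<Rightarrow> real \<Rightarrow> rmat) \<Rightarrow> real \<Rightarrow> real \<Rightarrow> rmat" where
  "vth1 F x y = (\<lambda>i j. x * deriv (\<lambda>t. F t y i j) x)"

definition vth2 :: "(real \<Rightarrow> real \<Rightarrow> rmat) \<Rightarrow> real \<Rightarrow> real \<Rightarrow> rmat" where
  "vth2 F x y = (\<lambda>i j. y * deriv (\<lambda>t. F x t i j) y)"

definition vth :: "(real \<Rightarrow> real \<Rightarrow> rmat) \<Rightarrow> real \<Rightarrow> real \<Rightarrow> rmat" where
  "vth F x y = madd (vth1 F x y) (vth2 F x y)"

definition Tmat :: "rmat \<Rightarrow> rmat" where
  "Tmat S = mmult (mmult S Lam) (ltinv S)"

text \<open>\<Psi> = \<Pi>^{-1} \<theta>(T), with \<Pi>^{-1} = S L^{-1} S^{-1}.\<close>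
definition Psi :: "(nat \<Rightarrow> real) \<Rightarrow> nat \<Rightarrow> rmat \<Rightarrow> rmat" where
  "Psi c N S = mmult (mmult (mmult S (ltinv pascal)) (ltinv S)) (theta_mat c N (Tmat S))"

end

theory Submission
  imports Defs "Jordan_Normal_Form.Determinant"
begin

definition ubw :: "nat \<Rightarrow> rmat \<Rightarrow> bool" where
  "ubw w A \<longleftrightarrow> (\<forall>i k. i + w < k \<longrightarrow> A i k = 0)"
definition lbw :: "nat \<Rightarrow> rmat \<Rightarrow> bool" where
  "lbw w A \<longleftrightarrow> (\<forall>k j. j + w < k \<longrightarrow> A k j = 0)"
definition rf :: "rmat \<Rightarrow> bool" where "rf A \<longleftrightarrow> (\<exists>w. ubw w A)"
definition cf :: "rmat \<Rightarrow> bool" where "cf A \<longleftrightarrow> (\<exists>w. lbw w A)"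

lemma mmult_fin:
  assumes "finite F" "\<And>k. k \<notin> F \<Longrightarrow> A i k * B k j = 0"
  shows "mmult A B i j = (\<Sum>k\<in>F. A i k * B k j)"
proof -
  have "mmult A B i j = infsum (\<lambda>k. A i k * B k j) F"
    unfolding mmult_def by (rule infsum_cong_neutral) (use assms in auto)
  then show ?thesis using assms by simp
qed

lemma sum_swap_aux:
  "(\<Sum>l\<in>L. (\<Sum>k\<in>K. a k * b k l) * (c l::real)) = (\<Sum>k\<in>K. a k * (\<Sum>l\<in>L. b k l * c l))"
proof -
  have "(\<Sum>l\<in>L. (\<Sum>k\<in>K. a k * b k l) * c l) = (\<Sum>l\<in>L. \<Sum>k\<in>K. a k * b k l * c l)"
    by (simp add: sum_distrib_right)
  also have "\<dots> = (\<Sum>k\<in>K. \<Sum>l\<in>L. a k * b k l * c l)" by (rule sum.swap)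
  also have "\<dots> = (\<Sum>k\<in>K. a k * (\<Sum>l\<in>L. b k l * c l))"
    by (simp add: sum_distrib_left mult.assoc)
  finally show ?thesis .
qed

lemma ubw_mono: "ubw a A \<Longrightarrow> a \<le> b \<Longrightarrow> ubw b A"
  unfolding ubw_def by auto
lemma lbw_mono: "lbw a A \<Longrightarrow> a \<le> b \<Longrightarrow> lbw b A"
  unfolding lbw_def by auto

lemma mmult_ubw: "ubw w A \<Longrightarrow> i + w \<le> n \<Longrightarrow> mmult A B i j = (\<Sum>k\<le>n. A i k * B k j)"
  by (rule mmult_fin) (auto simp: ubw_def)
lemma mmult_lbw: "lbw w B \<Longrightarrow> j + w \<le> n \<Longrightarrow> mmult A B i j = (\<Sum>k\<le>n. A i k * B k j)"
  by (rule mmult_fin) (auto simp: lbw_def)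

lemma mtrans_mmult: "mtrans (mmult A B) = mmult (mtrans B) (mtrans A)"
  unfolding mtrans_def mmult_def by (simp add: mult.commute)
lemma mtrans_mtrans[simp]: "mtrans (mtrans A) = A" unfolding mtrans_def by simp
lemma ubw_mtrans[simp]: "ubw w (mtrans A) \<longleftrightarrow> lbw w A"
  unfolding ubw_def lbw_def mtrans_def by auto
lemma lbw_mtrans[simp]: "lbw w (mtrans A) \<longleftrightarrow> ubw w A"
  unfolding ubw_def lbw_def mtrans_def by auto
lemma rf_mtrans[simp]: "rf (mtrans A) \<longleftrightarrow> cf A" unfolding rf_def cf_def by simp
lemma cf_mtrans[simp]: "cf (mtrans A) \<longleftrightarrow> rf A" unfolding rf_def cf_def by simp

lemma ubw_mmult: assumes "ubw a A" "ubw b B" shows "ubw (a + b) (mmult A B)"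
  unfolding ubw_def
proof (intro allI impI)
  fix i k assume "i + (a + b) < k"
  then show "mmult A B i k = 0" using assms
    by (subst mmult_ubw[of a A i "i + a"]) (auto simp: ubw_def intro!: sum.neutral)
qed
lemma lbw_mmult: assumes "lbw a A" "lbw b B" shows "lbw (a + b) (mmult A B)"
proof -
  have "ubw (b + a) (mmult (mtrans B) (mtrans A))" by (rule ubw_mmult) (use assms in auto)
  then show ?thesis by (simp add: mtrans_mmult[symmetric] add.commute)
qed

lemma rf_mmult[simp,intro]: "rf A \<Longrightarrow> rf B \<Longrightarrow> rf (mmult A B)"
  unfolding rf_def using ubw_mmult by blast
lemma cf_mmult[simp,intro]: "cf A \<Longrightarrow> cf B \<Longrightarrow> cf (mmult A B)"
  unfolding cf_def using lbw_mmult by blast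

lemma rf_common: "rf A \<Longrightarrow> rf B \<Longrightarrow> \<exists>w. ubw w A \<and> ubw w B"
  unfolding rf_def by (metis max.cobounded1 max.cobounded2 ubw_mono)
lemma cf_common: "cf A \<Longrightarrow> cf B \<Longrightarrow> \<exists>w. lbw w A \<and> lbw w B"
  unfolding cf_def by (metis max.cobounded1 max.cobounded2 lbw_mono)

lemma assoc_rr: assumes "rf A" "rf B" shows "mmult (mmult A B) C = mmult A (mmult B C)"
proof (intro ext)
  fix i j
  obtain a where a: "ubw a A" using assms rf_def by auto
  obtain b where b: "ubw b B" using assms rf_def by auto
  have ab: "ubw (a+b) (mmult A B)" using a b by (rule ubw_mmult)
  have "mmult (mmult A B) C i j = (\<Sum>l\<le>i+a+b. mmult A B i l * C l j)"
    using ab by (rule mmult_ubw) simp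
  also have "\<dots> = (\<Sum>l\<le>i+a+b. (\<Sum>k\<le>i+a. A i k * B k l) * C l j)"
    using a by (intro sum.cong refl, subst mmult_ubw) auto
  also have "\<dots> = (\<Sum>k\<le>i+a. A i k * (\<Sum>l\<le>i+a+b. B k l * C l j))"
    by (rule sum_swap_aux)
  also have "\<dots> = (\<Sum>k\<le>i+a. A i k * mmult B C k j)"
  proof -
    have "\<And>k. k \<le> i+a \<Longrightarrow> mmult B C k j = (\<Sum>l\<le>i+a+b. B k l * C l j)"
      using mmult_ubw[OF b] by simp
    then show ?thesis by simp
  qed
  also have "\<dots> = mmult A (mmult B C) i j" using a by (rule mmult_ubw[symmetric]) simp
  finally show "mmult (mmult A B) C i j = mmult A (mmult B C) i j" .
qed

lemma assoc_cc: assumes "cf B" "cf C" shows "mmult (mmult A B) C = mmult A (mmult B C)"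
proof -
  have "mmult (mmult (mtrans C) (mtrans B)) (mtrans A) = mmult (mtrans C) (mmult (mtrans B) (mtrans A))"
    by (rule assoc_rr) (use assms in auto)
  then have "mtrans (mmult (mmult A B) C) = mtrans (mmult A (mmult B C))"
    by (simp add: mtrans_mmult)
  then show ?thesis by (metis mtrans_mtrans)
qed

lemma assoc_rc: assumes "rf A" "cf C" shows "mmult (mmult A B) C = mmult A (mmult B C)"
proof (intro ext)
  fix i j
  obtain a where a: "ubw a A" using assms rf_def by auto
  obtain b where b: "lbw b C" using assms cf_def by auto
  have "mmult (mmult A B) C i j = (\<Sum>l\<le>j+b. mmult A B i l * C l j)"
    using b by (rule mmult_lbw) simp
  also have "\<dots> = (\<Sum>l\<le>j+b. (\<Sum>k\<le>i+a. A i k * B k l) * C l j)"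
    using a by (intro sum.cong refl, subst mmult_ubw) auto
  also have "\<dots> = (\<Sum>k\<le>i+a. A i k * (\<Sum>l\<le>j+b. B k l * C l j))"
    by (rule sum_swap_aux)
  also have "\<dots> = (\<Sum>k\<le>i+a. A i k * mmult B C k j)"
    using b by (intro sum.cong refl, subst mmult_lbw[of b]) auto
  also have "\<dots> = mmult A (mmult B C) i j" using a by (rule mmult_ubw[symmetric]) simp
  finally show "mmult (mmult A B) C i j = mmult A (mmult B C) i j" .
qed

lemma mmult_idm_left[simp]: "mmult idm A = A"
proof (intro ext)
  fix i j show "mmult idm A i j = A i j"
    by (subst mmult_fin[of "{i}"]) (auto simp: idm_def)
qed
lemma mmult_idm_right[simp]: "mmult A idm = A"
proof (intro ext)
  fix i j show "mmult A idm i j = A i j"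
    by (subst mmult_fin[of "{j}"]) (auto simp: idm_def)
qed

lemma mmult_mneg_left: "mmult (mneg A) B = mneg (mmult A B)"
  unfolding mmult_def mneg_def by (simp add: infsum_uminus)
lemma mmult_mneg_right: "mmult A (mneg B) = mneg (mmult A B)"
  unfolding mmult_def mneg_def by (simp add: infsum_uminus)

lemma madd_left_r: assumes "rf A" "rf B" shows "mmult (madd A B) C = madd (mmult A C) (mmult B C)"
proof (intro ext)
  fix i j
  obtain w where w: "ubw w A" "ubw w B" using rf_common assms by blast
  have "ubw w (madd A B)" using w unfolding ubw_def madd_def by auto
  then show "mmult (madd A B) C i j = madd (mmult A C) (mmult B C) i j"
    using w by (simp add: madd_def mmult_ubw[of w _ i "i+w"] sum.distrib algebra_simps)
qed
lemma madd_right_r: assumes "rf A" shows "mmult A (madd B C) = madd (mmult A B) (mmult A C)"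
proof (intro ext)
  fix i j
  obtain w where w: "ubw w A" using assms rf_def by blast
  then show "mmult A (madd B C) i j = madd (mmult A B) (mmult A C) i j"
    by (simp add: madd_def mmult_ubw[of w _ i "i+w"] sum.distrib algebra_simps)
qed
lemma madd_left_c: assumes "cf C" shows "mmult (madd A B) C = madd (mmult A C) (mmult B C)"
proof (intro ext)
  fix i j
  obtain w where w: "lbw w C" using assms cf_def by blast
  then show "mmult (madd A B) C i j = madd (mmult A C) (mmult B C) i j"
    by (simp add: madd_def mmult_lbw[of w _ j "j+w"] sum.distrib algebra_simps)
qed
lemma mscale_left_r: assumes "rf A" shows "mmult (mscale c A) B = mscale c (mmult A B)"
proof (intro ext)
  fix i j
  obtain w where w: "ubw w A" using assms rf_def by blast
  have "ubw w (mscale c A)" using w unfolding ubw_def mscale_def by auto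
  then show "mmult (mscale c A) B i j = mscale c (mmult A B) i j"
    using w by (simp add: mscale_def mmult_ubw[of w _ i "i+w"] sum_distrib_left algebra_simps)
qed
lemma mscale_right_r: assumes "rf A" shows "mmult A (mscale c B) = mscale c (mmult A B)"
proof (intro ext)
  fix i j
  obtain w where w: "ubw w A" using assms rf_def by blast
  then show "mmult A (mscale c B) i j = mscale c (mmult A B) i j"
    by (simp add: mscale_def mmult_ubw[of w _ i "i+w"] sum_distrib_left algebra_simps)
qed

lemma lower_tri_ubw: "lower_tri A \<longleftrightarrow> ubw 0 A" unfolding lower_tri_def ubw_def by auto
lemma rf_lower[simp,intro]: "lower_tri A \<Longrightarrow> rf A" unfolding rf_def lower_tri_ubw by blast
lemma rf_lowerU[simp,intro]: "lower_unitri A \<Longrightarrow> rf A" unfolding lower_unitri_def by auto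
lemma cf_mtrans_lower[simp,intro]: "lower_tri A \<Longrightarrow> cf (mtrans A)" by simp
lemma rf_idm[simp,intro]: "rf idm" unfolding rf_def ubw_def idm_def by (rule exI[of _ 0]) auto
lemma cf_idm[simp,intro]: "cf idm" unfolding cf_def lbw_def idm_def by (rule exI[of _ 0]) auto
lemma rf_Lam[simp,intro]: "rf Lam" unfolding rf_def ubw_def Lam_def by (rule exI[of _ 1]) auto
lemma rf_madd[simp,intro]: assumes "rf A" "rf B" shows "rf (madd A B)"
proof -
  obtain w where "ubw w A" "ubw w B" using rf_common[OF assms] by blast
  then have "ubw w (madd A B)" unfolding ubw_def madd_def by simp
  then show ?thesis unfolding rf_def by blast
qed
lemma cf_madd[simp,intro]: assumes "cf A" "cf B" shows "cf (madd A B)"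
proof -
  obtain w where "lbw w A" "lbw w B" using cf_common[OF assms] by blast
  then have "lbw w (madd A B)" unfolding lbw_def madd_def by simp
  then show ?thesis unfolding cf_def by blast
qed
lemma rf_mscale[simp,intro]: "rf A \<Longrightarrow> rf (mscale c A)"
  unfolding rf_def ubw_def mscale_def by auto
lemma rf_mneg[simp,intro]: "rf A \<Longrightarrow> rf (mneg A)"
  unfolding rf_def ubw_def mneg_def by auto
lemma rf_diag[simp,intro]: "diagonal A \<Longrightarrow> rf A"
  unfolding rf_def ubw_def diagonal_def by (rule exI[of _ 0]) auto
lemma cf_diag[simp,intro]: "diagonal A \<Longrightarrow> cf A"
  unfolding cf_def lbw_def diagonal_def by (rule exI[of _ 0]) auto

function inv_rec :: "rmat \<Rightarrow> nat \<Rightarrow> nat \<Rightarrow> real" where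
  "inv_rec A i j = (if i < j then 0 else if i = j then 1
      else - (\<Sum>k\<in>{j..<i}. A i k * inv_rec A k j))"
  by auto
termination by (relation "Wellfounded.measure (\<lambda>(A,i,j). i)") auto

declare inv_rec.simps[simp del]

lemma inv_rec_lower: "lower_unitri (inv_rec A)"
  unfolding lower_unitri_def lower_tri_def by (auto simp: inv_rec.simps)

lemma inv_rec_right:
  assumes A: "lower_unitri A" shows "mmult A (inv_rec A) = idm"
proof (intro ext)
  fix i j
  let ?X = "inv_rec A"
  have A0: "\<And>k. i < k \<Longrightarrow> A i k = 0" and A1: "A i i = 1"
    using A unfolding lower_unitri_def lower_tri_def by auto
  have "mmult A ?X i j = (\<Sum>k\<le>i. A i k * ?X k j)"
    using A by (intro mmult_ubw[of 0]) (auto simp: lower_unitri_def lower_tri_ubw)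
  also have "\<dots> = idm i j"
  proof (cases "i < j")
    case True
    then show ?thesis by (auto simp: idm_def inv_rec.simps intro!: sum.neutral)
  next
    case False
    show ?thesis
    proof (cases "i = j")
      case True
      have "(\<Sum>k\<le>i. A i k * ?X k j) = (\<Sum>k\<in>insert i {..<i}. A i k * ?X k j)"
        by (intro sum.cong) auto
      also have "\<dots> = A i i * ?X i j + (\<Sum>k<i. A i k * ?X k j)" by simp
      also have "(\<Sum>k<i. A i k * ?X k j) = 0" using True by (auto simp: inv_rec.simps intro!: sum.neutral)
      finally show ?thesis using True A1 by (simp add: idm_def inv_rec.simps)
    next
      case False2: False
      with False have ji: "j < i" by simp
      have "{..i} = insert i ({j..<i} \<union> {..<j})" using ji by auto
      moreover have "(\<Sum>k\<in>{j..<i} \<union> {..<j}. A i k * ?X k j) = (\<Sum>k\<in>{j..<i}. A i k * ?X k j) + (\<Sum>k\<in>{..<j}. A i k * ?X k j)"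
        by (rule sum.union_disjoint) auto
      ultimately have "(\<Sum>k\<le>i. A i k * ?X k j) = A i i * ?X i j + ((\<Sum>k\<in>{j..<i}. A i k * ?X k j) + (\<Sum>k\<in>{..<j}. A i k * ?X k j))"
        using ji by simp
      also have "(\<Sum>k\<in>{..<j}. A i k * ?X k j) = 0" by (auto simp: inv_rec.simps intro!: sum.neutral)
      also have "?X i j = - (\<Sum>k\<in>{j..<i}. A i k * ?X k j)" using ji by (subst inv_rec.simps) simp
      finally show ?thesis using A1 ji by (simp add: idm_def)
    qed
  qed
  finally show "mmult A ?X i j = idm i j" .
qed

lemma ltinv_unique:
  assumes "lower_tri A" "lower_tri X" "mmult A X = idm" "mmult X A = idm"
  shows "ltinv A = X"
  unfolding ltinv_def
proof (rule the1_equality)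
  show "\<exists>!X. lower_tri X \<and> mmult A X = idm \<and> mmult X A = idm"
  proof (rule ex1I[of _ X])
    show "lower_tri X \<and> mmult A X = idm \<and> mmult X A = idm" using assms by simp
    fix Y assume Y: "lower_tri Y \<and> mmult A Y = idm \<and> mmult Y A = idm"
    have "Y = mmult Y (mmult A X)" using assms by simp
    also have "\<dots> = mmult (mmult Y A) X" using Y assms by (intro assoc_rr[symmetric]) auto
    also have "\<dots> = X" using Y by simp
    finally show "Y = X" .
  qed
  show "lower_tri X \<and> mmult A X = idm \<and> mmult X A = idm" using assms by simp
qed

lemma ltinv_props:
  assumes A: "lower_unitri A"
  shows "lower_unitri (ltinv A)" "mmult A (ltinv A) = idm" "mmult (ltinv A) A = idm"
    "ltinv A = inv_rec A"
proof -
  let ?X = "inv_rec A" let ?Y = "inv_rec ?X"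
  have XY: "mmult ?X ?Y = idm" by (rule inv_rec_right[OF inv_rec_lower])
  have AX: "mmult A ?X = idm" by (rule inv_rec_right[OF A])
  have "A = mmult A (mmult ?X ?Y)" using XY by simp
  also have "\<dots> = mmult (mmult A ?X) ?Y" using A inv_rec_lower[of A] by (simp add: assoc_rr)
  also have "\<dots> = ?Y" using AX by simp
  finally have "A = ?Y" .
  then have XA: "mmult ?X A = idm" using XY by simp
  have eq: "ltinv A = ?X"
    by (rule ltinv_unique) (use A inv_rec_lower[of A] AX XA in \<open>auto simp: lower_unitri_def\<close>)
  then show "ltinv A = inv_rec A" "lower_unitri (ltinv A)" "mmult A (ltinv A) = idm" "mmult (ltinv A) A = idm"
    using inv_rec_lower[of A] AX XA by auto
qed

lemma ltinv_ltinv: assumes "lower_unitri A" shows "ltinv (ltinv A) = A"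
  by (rule ltinv_unique) (use ltinv_props[OF assms] assms in \<open>auto simp: lower_unitri_def\<close>)

lemma rf_ltinv[simp,intro]: "lower_unitri A \<Longrightarrow> rf (ltinv A)"
  using ltinv_props(1) by blast

definition dinv :: "rmat \<Rightarrow> rmat" where
  "dinv H = (\<lambda>i j. if i = j then 1 / H i i else 0)"

lemma mmult_diag_right: "diagonal H \<Longrightarrow> mmult A H i j = A i j * H j j"
  by (subst mmult_fin[of "{j}"]) (auto simp: diagonal_def)
lemma mmult_diag_left: "diagonal H \<Longrightarrow> mmult H A i j = H i i * A i j"
  by (subst mmult_fin[of "{i}"]) (auto simp: diagonal_def)

lemma diagonal_dinv[simp]: "diagonal (dinv H)" unfolding diagonal_def dinv_def by auto

lemma ltinv_diag:
  assumes "diagonal H" "\<And>k. H k k \<noteq> 0" shows "ltinv H = dinv H"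
proof (rule ltinv_unique)
  show "lower_tri H" "lower_tri (dinv H)" using assms(1)
    by (auto simp: lower_tri_def diagonal_def dinv_def)
  show "mmult H (dinv H) = idm"
    by (rule ext, rule ext, simp add: mmult_diag_right[OF diagonal_dinv] assms)
       (auto simp: dinv_def idm_def assms diagonal_def[of H] assms(1)[unfolded diagonal_def])
  show "mmult (dinv H) H = idm"
    by (rule ext, rule ext, simp add: mmult_diag_right[OF assms(1)])
       (auto simp: dinv_def idm_def assms)
qed

lemma pascal_lower: "lower_unitri pascal"
  unfolding lower_unitri_def lower_tri_def pascal_def by auto

lemma Lam_row: "mmult Lam B i j = B (Suc i) j"
  by (subst mmult_fin[of "{Suc i}"]) (auto simp: Lam_def)
lemma Lam_col: "mmult A Lam i j = (if j = 0 then 0 else A i (j - 1))"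
  by (subst mmult_fin[of "{j - 1}"]) (auto simp: Lam_def)

lemma pascal_Lam: "mmult Lam pascal = mmult pascal (madd Lam idm)"
proof (intro ext)
  fix n m
  have "mmult pascal (madd Lam idm) n m = mmult pascal Lam n m + mmult pascal idm n m"
    by (subst madd_right_r) (auto simp: madd_def pascal_lower)
  also have "\<dots> = real (Suc n choose m)"
    by (cases m) (auto simp: Lam_col pascal_def)
  finally show "mmult Lam pascal n m = mmult pascal (madd Lam idm) n m"
    by (simp add: Lam_row pascal_def)
qed

lemma Linv_Lam: "mmult (ltinv pascal) Lam = mmult (madd Lam idm) (ltinv pascal)"
proof -
  let ?L = pascal let ?Li = "ltinv pascal"
  note P = ltinv_props[OF pascal_lower]
  have rL: "rf ?L" "rf ?Li" using pascal_lower by auto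
  have "mmult ?Li Lam = mmult (mmult ?Li Lam) (mmult ?L ?Li)" using P by simp
  also have "\<dots> = mmult ?Li (mmult (mmult Lam ?L) ?Li)" using rL by (simp add: assoc_rr)
  also have "\<dots> = mmult ?Li (mmult (mmult ?L (madd Lam idm)) ?Li)" by (simp add: pascal_Lam)
  also have "\<dots> = mmult (mmult ?Li ?L) (mmult (madd Lam idm) ?Li)" using rL by (simp add: assoc_rr)
  also have "\<dots> = mmult (madd Lam idm) ?Li" using P by simp
  finally show ?thesis .
qed

lemma rf_theta[simp,intro]: "rf T \<Longrightarrow> rf (theta_mat c n T)"
  by (induction n) auto

lemma theta_Lam_comm: "mmult (theta_mat c n Lam) Lam = mmult Lam (theta_mat c n Lam)"
proof (induction n)
  case 0 then show ?case by simp
next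
  case (Suc n)
  let ?t = "theta_mat c n Lam" let ?B = "madd Lam (mscale (c n - 1) idm)"
  have BL: "mmult ?B Lam = mmult Lam ?B"
    by (simp add: madd_left_r madd_right_r mscale_left_r mscale_right_r)
  have "mmult (theta_mat c (Suc n) Lam) Lam = mmult ?t (mmult ?B Lam)" by (simp add: assoc_rr)
  also have "\<dots> = mmult (mmult ?t Lam) ?B" by (simp add: BL assoc_rr)
  also have "\<dots> = mmult Lam (theta_mat c (Suc n) Lam)" by (simp add: Suc assoc_rr)
  finally show ?case .
qed

lemma theta_conj:
  assumes S: "lower_unitri S"
  shows "theta_mat c n (mmult (mmult S Lam) (ltinv S)) = mmult (mmult S (theta_mat c n Lam)) (ltinv S)"
proof (induction n)
  case 0 then show ?case by simp
next
  case (Suc n)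
  let ?Si = "ltinv S"
  note P = ltinv_props[OF S]
  have rS: "rf S" "rf ?Si" using S by auto
  let ?a = "c n - 1"
  have I: "mmult (mmult S (mscale ?a idm)) ?Si = mscale ?a idm"
    using rS P by (simp add: mscale_right_r mscale_left_r)
  have B: "madd (mmult (mmult S Lam) ?Si) (mscale ?a idm) = mmult (mmult S (madd Lam (mscale ?a idm))) ?Si"
    using rS by (simp add: madd_right_r madd_left_r I)
  have "theta_mat c (Suc n) (mmult (mmult S Lam) ?Si)
     = mmult (mmult (mmult S (theta_mat c n Lam)) ?Si) (mmult (mmult S (madd Lam (mscale ?a idm))) ?Si)"
    by (simp add: Suc B)
  also have "\<dots> = mmult (mmult S (theta_mat c n Lam)) (mmult (mmult ?Si S) (mmult (madd Lam (mscale ?a idm)) ?Si))"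
    using rS by (simp add: assoc_rr)
  also have "\<dots> = mmult (mmult S (theta_mat c (Suc n) Lam)) ?Si"
    using rS P by (simp add: assoc_rr)
  finally show ?case .
qed

definition mderiv :: "(real \<Rightarrow> rmat) \<Rightarrow> real \<Rightarrow> rmat" where
  "mderiv F t0 = (\<lambda>i j. deriv (\<lambda>t. F t i j) t0)"
definition mdiff :: "(real \<Rightarrow> rmat) \<Rightarrow> real \<Rightarrow> bool" where
  "mdiff F t0 \<longleftrightarrow> (\<forall>i j. (\<lambda>t. F t i j) field_differentiable (at t0))"

lemma DERIV_mult2:
  assumes "(f has_field_derivative Da) (at x)" "(g has_field_derivative Db) (at x)"
  shows "((\<lambda>x. f x * g x) has_field_derivative Da * g x + f x * (Db::real)) (at x)"
proof -
  show ?thesis using DERIV_mult[OF assms] by (simp only: mult.commute[of Db "f x"])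
qed

lemma mdiff_D: "mdiff F t0 \<Longrightarrow> ((\<lambda>t. F t i j) has_field_derivative mderiv F t0 i j) (at t0)"
  unfolding mdiff_def mderiv_def using DERIV_deriv_iff_field_differentiable by blast

lemma mdiffI:
  assumes "\<And>i j. ((\<lambda>t. F t i j) has_field_derivative D i j) (at t0)"
  shows "mdiff F t0" "mderiv F t0 = D"
  using assms unfolding mdiff_def mderiv_def field_differentiable_def
  by (auto intro!: ext DERIV_imp_deriv)

lemma fd_ev:
  assumes "f field_differentiable (at t0)" "\<forall>\<^sub>F t in nhds t0. g t = f t"
  shows "g field_differentiable (at t0)"
proof -
  obtain D where "(f has_field_derivative D) (at t0)" using assms(1) field_differentiable_def by blast
  then have "(g has_field_derivative D) (at t0)"
    using DERIV_cong_ev[of t0 t0 g f D D] assms(2) by simp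
  then show ?thesis unfolding field_differentiable_def by blast
qed

lemma deriv_ev0:
  assumes "\<forall>\<^sub>F t in nhds t0. f t = (c::real)" shows "deriv f t0 = 0"
proof -
  have "((\<lambda>t. c) has_field_derivative 0) (at t0)" by simp
  then have "(f has_field_derivative 0) (at t0)"
    using DERIV_cong_ev[of t0 t0 f "\<lambda>t. c" 0 0] assms by simp
  then show ?thesis by (rule DERIV_imp_deriv)
qed

lemma fd_ev_const:
  assumes "\<forall>\<^sub>F t in nhds t0. f t = (c::real)" shows "f field_differentiable (at t0)"
  by (rule fd_ev[OF field_differentiable_const assms])

lemma mdiff_ev:
  assumes "\<forall>\<^sub>F t in nhds t0. G t = F t" "mdiff F t0"
  shows "mdiff G t0" "mderiv G t0 = mderiv F t0"
proof -
  have "\<And>i j. ((\<lambda>t. G t i j) has_field_derivative mderiv F t0 i j) (at t0)"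
  proof -
    fix i j
    have "\<forall>\<^sub>F t in nhds t0. G t i j = F t i j" using assms(1) by (rule eventually_mono) simp
    then show "((\<lambda>t. G t i j) has_field_derivative mderiv F t0 i j) (at t0)"
      using DERIV_cong_ev[of t0 t0 "\<lambda>t. G t i j" "\<lambda>t. F t i j"] mdiff_D[OF assms(2)] by simp
  qed
  then show "mdiff G t0" "mderiv G t0 = mderiv F t0" by (rule mdiffI)+
qed

lemma ev_at: "\<forall>\<^sub>F t in nhds t0. P t \<Longrightarrow> P t0"
  by (rule eventually_nhds_x_imp_x)

lemma mderiv_ev0:
  assumes "\<forall>\<^sub>F t in nhds t0. F t i j = 0" shows "mderiv F t0 i j = 0"
  unfolding mderiv_def by (rule deriv_ev0[OF assms])

lemma mdiff_const: "mdiff (\<lambda>t. A) t0" "mderiv (\<lambda>t. A) t0 = (\<lambda>i j. 0)"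
  by (rule mdiffI[of _ "\<lambda>i j. 0"], simp)+

lemma mdiff_madd:
  assumes "mdiff F t0" "mdiff G t0"
  shows "mdiff (\<lambda>t. madd (F t) (G t)) t0" "mderiv (\<lambda>t. madd (F t) (G t)) t0 = madd (mderiv F t0) (mderiv G t0)"
proof -
  have "\<And>i j. ((\<lambda>t. madd (F t) (G t) i j) has_field_derivative madd (mderiv F t0) (mderiv G t0) i j) (at t0)"
    unfolding madd_def by (intro DERIV_add mdiff_D assms)
  then show "mdiff (\<lambda>t. madd (F t) (G t)) t0" "mderiv (\<lambda>t. madd (F t) (G t)) t0 = madd (mderiv F t0) (mderiv G t0)"
    by (rule mdiffI)+
qed

lemma mdiff_mtrans:
  assumes "mdiff F t0"
  shows "mdiff (\<lambda>t. mtrans (F t)) t0" "mderiv (\<lambda>t. mtrans (F t)) t0 = mtrans (mderiv F t0)"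
proof -
  have "\<And>i j. ((\<lambda>t. mtrans (F t) i j) has_field_derivative mtrans (mderiv F t0) i j) (at t0)"
    unfolding mtrans_def by (intro mdiff_D assms)
  then show "mdiff (\<lambda>t. mtrans (F t)) t0" "mderiv (\<lambda>t. mtrans (F t)) t0 = mtrans (mderiv F t0)"
    by (rule mdiffI)+
qed

lemma ubw_ev_deriv:
  assumes "\<forall>\<^sub>F t in nhds t0. ubw w (A t)" shows "ubw w (mderiv A t0)"
  unfolding ubw_def
proof (intro allI impI)
  fix i k assume "i + w < k"
  then have "\<forall>\<^sub>F t in nhds t0. A t i k = 0" using assms by (auto elim!: eventually_mono simp: ubw_def)
  then show "mderiv A t0 i k = 0" by (rule mderiv_ev0)
qed

lemma lbw_ev_deriv:
  assumes "\<forall>\<^sub>F t in nhds t0. lbw w (A t)" shows "lbw w (mderiv A t0)"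
  unfolding lbw_def
proof (intro allI impI)
  fix k j assume "j + w < k"
  then have "\<forall>\<^sub>F t in nhds t0. A t k j = 0" using assms by (auto elim!: eventually_mono simp: lbw_def)
  then show "mderiv A t0 k j = 0" by (rule mderiv_ev0)
qed

lemma mdiff_mmult_r:
  assumes ev: "\<forall>\<^sub>F t in nhds t0. ubw w (A t)" and dA: "mdiff A t0" and dB: "mdiff B t0"
  shows "mdiff (\<lambda>t. mmult (A t) (B t)) t0"
    "mderiv (\<lambda>t. mmult (A t) (B t)) t0 = madd (mmult (mderiv A t0) (B t0)) (mmult (A t0) (mderiv B t0))"
proof -
  have A0: "ubw w (A t0)" using ev by (rule ev_at)
  have A'0: "ubw w (mderiv A t0)" using ev by (rule ubw_ev_deriv)
  have D: "((\<lambda>t. mmult (A t) (B t) i j) has_field_derivative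
      madd (mmult (mderiv A t0) (B t0)) (mmult (A t0) (mderiv B t0)) i j) (at t0)" for i j
  proof -
    have e: "\<forall>\<^sub>F t in nhds t0. mmult (A t) (B t) i j = (\<Sum>k\<le>i+w. A t i k * B t k j)"
      using ev by (rule eventually_mono) (rule mmult_ubw, auto)
    have "((\<lambda>t. (\<Sum>k\<le>i+w. A t i k * B t k j)) has_field_derivative
       (\<Sum>k\<le>i+w. mderiv A t0 i k * B t0 k j + A t0 i k * mderiv B t0 k j)) (at t0)"
      by (rule DERIV_sum) (rule DERIV_mult2[OF mdiff_D[OF dA] mdiff_D[OF dB]])
    moreover have "(\<Sum>k\<le>i+w. mderiv A t0 i k * B t0 k j + A t0 i k * mderiv B t0 k j)
        = madd (mmult (mderiv A t0) (B t0)) (mmult (A t0) (mderiv B t0)) i j"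
      unfolding madd_def by (simp add: mmult_ubw[OF A0, of i "i+w"] mmult_ubw[OF A'0, of i "i+w"] sum.distrib)
    ultimately show ?thesis using DERIV_cong_ev[OF refl e refl] by simp
  qed
  then show "mdiff (\<lambda>t. mmult (A t) (B t)) t0"
    "mderiv (\<lambda>t. mmult (A t) (B t)) t0 = madd (mmult (mderiv A t0) (B t0)) (mmult (A t0) (mderiv B t0))"
    by (rule mdiffI)+
qed

lemma mdiff_mmult_c:
  assumes ev: "\<forall>\<^sub>F t in nhds t0. lbw w (B t)" and dA: "mdiff A t0" and dB: "mdiff B t0"
  shows "mdiff (\<lambda>t. mmult (A t) (B t)) t0"
    "mderiv (\<lambda>t. mmult (A t) (B t)) t0 = madd (mmult (mderiv A t0) (B t0)) (mmult (A t0) (mderiv B t0))"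
proof -
  have B0: "lbw w (B t0)" using ev by (rule ev_at)
  have B'0: "lbw w (mderiv B t0)" using ev by (rule lbw_ev_deriv)
  have D: "((\<lambda>t. mmult (A t) (B t) i j) has_field_derivative
      madd (mmult (mderiv A t0) (B t0)) (mmult (A t0) (mderiv B t0)) i j) (at t0)" for i j
  proof -
    have e: "\<forall>\<^sub>F t in nhds t0. mmult (A t) (B t) i j = (\<Sum>k\<le>j+w. A t i k * B t k j)"
      using ev by (rule eventually_mono) (rule mmult_lbw, auto)
    have "((\<lambda>t. (\<Sum>k\<le>j+w. A t i k * B t k j)) has_field_derivative
       (\<Sum>k\<le>j+w. mderiv A t0 i k * B t0 k j + A t0 i k * mderiv B t0 k j)) (at t0)"
      by (rule DERIV_sum) (rule DERIV_mult2[OF mdiff_D[OF dA] mdiff_D[OF dB]])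
    moreover have "(\<Sum>k\<le>j+w. mderiv A t0 i k * B t0 k j + A t0 i k * mderiv B t0 k j)
        = madd (mmult (mderiv A t0) (B t0)) (mmult (A t0) (mderiv B t0)) i j"
      unfolding madd_def by (simp add: mmult_lbw[OF B0, of j "j+w"] mmult_lbw[OF B'0, of j "j+w"] sum.distrib)
    ultimately show ?thesis using DERIV_cong_ev[OF refl e refl] by simp
  qed
  then show "mdiff (\<lambda>t. mmult (A t) (B t)) t0"
    "mderiv (\<lambda>t. mmult (A t) (B t)) t0 = madd (mmult (mderiv A t0) (B t0)) (mmult (A t0) (mderiv B t0))"
    by (rule mdiffI)+
qed

lemma fd_inv_rec:
  assumes "\<And>i k. (\<lambda>t. A t i k) field_differentiable (at t0)"
  shows "(\<lambda>t. inv_rec (A t) i j) field_differentiable (at t0)"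
proof (induction i rule: less_induct)
  case (less i)
  show ?case
  proof (cases "i < j \<or> i = j")
    case True
    then show ?thesis by (subst inv_rec.simps) auto
  next
    case False
    have "(\<lambda>t. - (\<Sum>k\<in>{j..<i}. A t i k * inv_rec (A t) k j)) field_differentiable (at t0)"
      by (intro field_differentiable_minus field_differentiable_sum field_differentiable_mult assms less) auto
    then show ?thesis using False by (subst inv_rec.simps) simp
  qed
qed

lemma mdiff_ltinv:
  assumes ev: "\<forall>\<^sub>F t in nhds t0. lower_unitri (A t)" and dA: "mdiff A t0"
  shows "mdiff (\<lambda>t. ltinv (A t)) t0"
    "mderiv (\<lambda>t. ltinv (A t)) t0 = mneg (mmult (mmult (ltinv (A t0)) (mderiv A t0)) (ltinv (A t0)))"
proof -
  have e1: "\<forall>\<^sub>F t in nhds t0. ltinv (A t) = inv_rec (A t)"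
    using ev by (rule eventually_mono) (rule ltinv_props(4))
  have "mdiff (\<lambda>t. inv_rec (A t)) t0"
    unfolding mdiff_def using dA unfolding mdiff_def by (intro allI fd_inv_rec) auto
  then show dI: "mdiff (\<lambda>t. ltinv (A t)) t0" using mdiff_ev(1)[OF e1] by blast
  have A0: "lower_unitri (A t0)" using ev by (rule ev_at)
  note P = ltinv_props[OF A0]
  have evu: "\<forall>\<^sub>F t in nhds t0. ubw 0 (A t)"
    using ev by (rule eventually_mono) (simp add: lower_unitri_def lower_tri_ubw)
  have e2: "\<forall>\<^sub>F t in nhds t0. mmult (A t) (ltinv (A t)) = idm"
    using ev by (rule eventually_mono) (rule ltinv_props(2))
  have "mderiv (\<lambda>t. mmult (A t) (ltinv (A t))) t0 = mderiv (\<lambda>t. idm) t0"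
    using mdiff_ev(2)[OF e2 mdiff_const(1)] .
  then have Z: "madd (mmult (mderiv A t0) (ltinv (A t0))) (mmult (A t0) (mderiv (\<lambda>t. ltinv (A t)) t0)) = (\<lambda>i j. 0)"
    using mdiff_mmult_r(2)[OF evu dA dI] mdiff_const(2) by simp
  then have Z2: "mmult (A t0) (mderiv (\<lambda>t. ltinv (A t)) t0) = mneg (mmult (mderiv A t0) (ltinv (A t0)))"
    unfolding mneg_def madd_def by (intro ext) (metis add_eq_0_iff)
  have rA': "rf (mderiv A t0)" using ubw_ev_deriv[OF evu] unfolding rf_def by blast
  have "mderiv (\<lambda>t. ltinv (A t)) t0 = mmult (mmult (ltinv (A t0)) (A t0)) (mderiv (\<lambda>t. ltinv (A t)) t0)"
    using P by simp
  also have "\<dots> = mmult (ltinv (A t0)) (mneg (mmult (mderiv A t0) (ltinv (A t0))))"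
    using A0 by (simp add: assoc_rr Z2)
  also have "\<dots> = mneg (mmult (mmult (ltinv (A t0)) (mderiv A t0)) (ltinv (A t0)))"
    using A0 rA' by (simp add: mmult_mneg_right assoc_rr)
  finally show "mderiv (\<lambda>t. ltinv (A t)) t0 = mneg (mmult (mmult (ltinv (A t0)) (mderiv A t0)) (ltinv (A t0)))" .
qed

lemma GB_entry:
  assumes A: "lower_unitri A" and C: "lower_unitri C" and H: "diagonal H"
  shows "mmult (mmult A H) (mtrans C) i j = (\<Sum>k\<le>min i j. A i k * H k k * C j k)"
proof -
  have "lbw 0 (mtrans C)" using C by (simp add: lower_unitri_def lower_tri_ubw)
  then have "mmult (mmult A H) (mtrans C) i j = (\<Sum>k\<le>j. mmult A H i k * mtrans C k j)"
    by (rule mmult_lbw) simp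
  also have "\<dots> = (\<Sum>k\<le>j. A i k * H k k * C j k)"
    by (simp add: mmult_diag_right[OF H] mtrans_def)
  also have "\<dots> = (\<Sum>k\<le>min i j. A i k * H k k * C j k)"
    by (rule sum.mono_neutral_right) (use A in \<open>auto simp: lower_unitri_def lower_tri_def\<close>)
  finally show ?thesis .
qed

lemma lead_minor_det: "lead_minor X n = det (mat n n (\<lambda>(i,j). X i j))"
proof -
  have "det (mat n n (\<lambda>(i,j). X i j)) = (\<Sum>p\<in>{p. p permutes {0..<n}}. of_int (sign p) * (\<Prod>i=0..<n. mat n n (\<lambda>(i,j). X i j) $$ (i, p i)))"
    by (rule det_def') simp
  also have "\<dots> = (\<Sum>p\<in>{p. p permutes {..<n}}. of_int (sign p) * (\<Prod>i<n. X i (p i)))"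
    by (intro sum.cong refl arg_cong2[where f="(*)"] prod.cong)
       (auto simp: atLeast0LessThan permutes_in_image)
  finally show ?thesis unfolding lead_minor_def by simp
qed

lemma H_nonzero:
  assumes A: "lower_unitri A" and C: "lower_unitri C" and H: "diagonal H"
    and mn: "\<forall>n. lead_minor (mmult (mmult A H) (mtrans C)) n \<noteq> 0"
  shows "H k k \<noteq> 0"
proof -
  define n where "n = Suc k"
  define Am where "Am = (mat n n (\<lambda>(i,j). A i j) :: real mat)"
  define Bm where "Bm = (mat n n (\<lambda>(i,j). H i i * C j i) :: real mat)"
  have cA: "Am \<in> carrier_mat n n" and cB: "Bm \<in> carrier_mat n n" by (auto simp: Am_def Bm_def)
  have eq: "mat n n (\<lambda>(i,j). mmult (mmult A H) (mtrans C) i j) = Am * Bm"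
  proof (rule eq_matI)
    fix i j assume ij: "i < dim_row (Am * Bm)" "j < dim_col (Am * Bm)"
    then have i: "i < n" and j: "j < n" by (auto simp: Am_def Bm_def)
    have "(Am * Bm) $$ (i,j) = (\<Sum>k\<in>{0..<n}. A i k * (H k k * C j k))"
      using i j by (simp add: Am_def Bm_def scalar_prod_def)
    also have "\<dots> = (\<Sum>k\<le>min i j. A i k * (H k k * C j k))"
      by (rule sum.mono_neutral_right)
         (use A C i j in \<open>auto simp: lower_unitri_def lower_tri_def\<close>)
    also have "\<dots> = (\<Sum>k\<le>min i j. A i k * H k k * C j k)" by (simp add: mult.assoc)
    finally show "mat n n (\<lambda>(i,j). mmult (mmult A H) (mtrans C) i j) $$ (i,j) = (Am * Bm) $$ (i,j)"
      using i j by (simp add: GB_entry[OF A C H])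
  qed (auto simp: Am_def Bm_def)
  have dA: "det Am = 1"
  proof -
    have "det Am = prod_list (diag_mat Am)"
      by (rule det_lower_triangular[OF _ cA]) (use A in \<open>auto simp: Am_def lower_unitri_def lower_tri_def\<close>)
    also have "\<dots> = 1" using A by (simp add: prod_list_diag_prod Am_def lower_unitri_def)
    finally show ?thesis .
  qed
  have dB: "det Bm = (\<Prod>i=0..<n. H i i)"
  proof -
    have "det Bm = prod_list (diag_mat Bm)"
      by (rule det_upper_triangular[OF _ cB]) (use C in \<open>auto simp: Bm_def upper_triangular_def lower_unitri_def lower_tri_def\<close>)
    also have "\<dots> = (\<Prod>i=0..<n. H i i)" using C by (simp add: prod_list_diag_prod Bm_def lower_unitri_def)
    finally show ?thesis .
  qed
  have "lead_minor (mmult (mmult A H) (mtrans C)) n = (\<Prod>i=0..<n. H i i)"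
    by (simp add: lead_minor_det eq det_mult[OF cA cB] dA dB)
  then have "(\<Prod>i=0..<n. H i i) \<noteq> 0" using mn by metis
  then show ?thesis by (simp add: n_def)
qed

lemma doolittle:
  fixes A C H M :: "real \<Rightarrow> rmat"
  assumes ev: "\<forall>\<^sub>F t in nhds t0. lower_unitri (A t) \<and> lower_unitri (C t) \<and> diagonal (H t)
      \<and> (\<forall>k. H t k k \<noteq> 0) \<and> M t = mmult (mmult (A t) (H t)) (mtrans (C t))"
    and dM: "mdiff M t0"
  shows "mdiff A t0 \<and> mdiff C t0 \<and> mdiff H t0"
proof -
  have ent: "\<forall>\<^sub>F t in nhds t0. \<forall>i j. M t i j = (\<Sum>k\<le>min i j. A t i k * H t k k * C t j k)"
    using ev by (rule eventually_mono) (auto simp: GB_entry)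
  have Mfd: "(\<lambda>t. M t i j) field_differentiable (at t0)" for i j
    using dM unfolding mdiff_def by blast
  have H0: "H t0 k k \<noteq> 0" for k using ev_at[OF ev] by blast
  have claim: "\<forall>k<m. (\<lambda>t. H t k k) field_differentiable (at t0) \<and> (\<forall>i. (\<lambda>t. A t i k) field_differentiable (at t0))
      \<and> (\<forall>j. (\<lambda>t. C t j k) field_differentiable (at t0))" for m
  proof (induction m)
    case 0 then show ?case by simp
  next
    case (Suc m)
    define Sg where "Sg t i j = (\<Sum>k<m. A t i k * H t k k * C t j k)" for t i j
    have fS: "(\<lambda>t. Sg t i j) field_differentiable (at t0)" for i j
      unfolding Sg_def using Suc.IH
      by (intro field_differentiable_sum field_differentiable_mult) auto
    have split: "(\<Sum>k\<le>m. f k) = (\<Sum>k<m. f k) + f m" for f :: "nat \<Rightarrow> real"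
      by (simp add: lessThan_Suc_atMost[symmetric])
    have eA: "\<forall>\<^sub>F t in nhds t0. \<forall>i\<ge>m. M t i m = A t i m * H t m m + Sg t i m"
      using eventually_conj[OF ent ev]
      by (rule eventually_mono) (auto simp: Sg_def split min_absorb2 lower_unitri_def)
    have eC: "\<forall>\<^sub>F t in nhds t0. \<forall>j\<ge>m. M t m j = H t m m * C t j m + Sg t m j"
      using eventually_conj[OF ent ev]
      by (rule eventually_mono) (auto simp: Sg_def split min_absorb1 lower_unitri_def)
    have fH: "(\<lambda>t. H t m m) field_differentiable (at t0)"
    proof (rule fd_ev)
      show "(\<lambda>t. M t m m - Sg t m m) field_differentiable (at t0)"
        by (intro field_differentiable_diff Mfd fS)
      show "\<forall>\<^sub>F t in nhds t0. H t m m = M t m m - Sg t m m"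
        using eventually_conj[OF eC ev] by (rule eventually_mono) (auto simp: lower_unitri_def)
    qed
    have fA: "(\<lambda>t. A t i m) field_differentiable (at t0)" for i
    proof (cases "i < m")
      case True
      show ?thesis by (rule fd_ev_const[where c=0])
        (use ev True in \<open>auto elim!: eventually_mono simp: lower_unitri_def lower_tri_def\<close>)
    next
      case False
      show ?thesis
      proof (rule fd_ev)
        show "(\<lambda>t. (M t i m - Sg t i m) / H t m m) field_differentiable (at t0)"
          by (intro field_differentiable_diff field_differentiable_divide Mfd fS fH H0)
        show "\<forall>\<^sub>F t in nhds t0. A t i m = (M t i m - Sg t i m) / H t m m"
          using eventually_conj[OF eA ev] by (rule eventually_mono) (use False in auto)
      qed
    qed
    have fC: "(\<lambda>t. C t j m) field_differentiable (at t0)" for j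
    proof (cases "j < m")
      case True
      show ?thesis by (rule fd_ev_const[where c=0])
        (use ev True in \<open>auto elim!: eventually_mono simp: lower_unitri_def lower_tri_def\<close>)
    next
      case False
      show ?thesis
      proof (rule fd_ev)
        show "(\<lambda>t. (M t m j - Sg t m j) / H t m m) field_differentiable (at t0)"
          by (intro field_differentiable_diff field_differentiable_divide Mfd fS fH H0)
        show "\<forall>\<^sub>F t in nhds t0. C t j m = (M t m j - Sg t m j) / H t m m"
          using eventually_conj[OF eC ev] by (rule eventually_mono) (use False in auto)
      qed
    qed
    show ?case using Suc.IH fH fA fC less_Suc_eq by auto
  qed
  have "mdiff A t0" unfolding mdiff_def using claim[of "Suc _"] by blast
  moreover have "mdiff C t0" unfolding mdiff_def using claim[of "Suc _"] by blast
  moreover have "mdiff H t0" unfolding mdiff_def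
  proof (intro allI)
    fix i j show "(\<lambda>t. H t i j) field_differentiable (at t0)"
    proof (cases "i = j")
      case True then show ?thesis using claim[of "Suc j"] by blast
    next
      case False
      show ?thesis by (rule fd_ev_const[where c=0])
        (use ev False in \<open>auto elim!: eventually_mono simp: diagonal_def\<close>)
    qed
  qed
  ultimately show ?thesis by blast
qed

lemma series_deriv:
  fixes a :: "nat \<Rightarrow> real"
  assumes V: "open V" "x \<in> V" and sm: "\<forall>s\<in>V. \<forall>n. summable (\<lambda>k. real k ^ n * (a k * s ^ k))"
  shows "\<exists>D. ((\<lambda>t. \<Sum>k. real k ^ p * (a k * t ^ k)) has_field_derivative D) (at x)
          \<and> x * D = (\<Sum>k. real k ^ Suc p * (a k * x ^ k))"
proof -
  obtain d where d: "d > 0" "ball x d \<subseteq> V" using V open_contains_ball by blast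
  define K where "K = (if x \<ge> 0 then x + d/2 else x - d/2)"
  have Kb: "K \<in> ball x d" using d by (auto simp: K_def dist_real_def)
  have xK: "norm x < norm K" using d by (auto simp: K_def)
  define e where "e k = real k ^ p * a k" for k
  have smK: "summable (\<lambda>k. e k * K ^ k)"
    using sm Kb d unfolding e_def by (auto simp: mult.assoc)
  have fe: "(\<lambda>t. \<Sum>k. real k ^ p * (a k * t ^ k)) = (\<lambda>t. \<Sum>k. e k * t ^ k)"
    by (simp add: e_def mult.assoc)
  have DD: "((\<lambda>t. \<Sum>k. real k ^ p * (a k * t ^ k)) has_field_derivative (\<Sum>n. diffs e n * x ^ n)) (at x)"
    unfolding fe by (rule termdiffs_strong[OF smK xK])
  define g where "g k = real k ^ Suc p * (a k * x ^ k)" for k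
  have sg: "summable g" using sm V unfolding g_def by blast
  have "x * (\<Sum>n. diffs e n * x ^ n) = suminf g"
  proof (cases "x = 0")
    case True
    have "g = (\<lambda>k. 0)" by (rule ext) (auto simp: g_def True)
    then show ?thesis using True by simp
  next
    case False
    have "g sums suminf g" using sg by (simp add: summable_sums)
    then have "(\<lambda>n. g (Suc n)) sums (suminf g - g 0)" using sums_Suc_iff[of g "suminf g - g 0"] by simp
    moreover have "g 0 = 0" by (simp add: g_def)
    moreover have "g (Suc n) = x * (diffs e n * x ^ n)" for n
      by (simp add: g_def diffs_def e_def algebra_simps)
    ultimately have "(\<lambda>n. x * (diffs e n * x ^ n)) sums suminf g" by simp
    then have "(\<lambda>n. (1/x) * (x * (diffs e n * x ^ n))) sums ((1/x) * suminf g)" by (rule sums_mult)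
    then have "(\<lambda>n. diffs e n * x ^ n) sums (suminf g / x)" using False by simp
    then have "(\<Sum>n. diffs e n * x ^ n) = suminf g / x" by (rule sums_unique[symmetric])
    then show ?thesis using False by simp
  qed
  then show ?thesis using DD unfolding g_def by blast
qed

definition hcoef :: "nat \<Rightarrow> (nat \<Rightarrow> real) \<Rightarrow> nat \<Rightarrow> (nat \<Rightarrow> real) \<Rightarrow> nat \<Rightarrow> real" where
  "hcoef Mb b N c k = (\<Prod>j<Mb. pochhammer (b j) k) / (\<Prod>j<N. pochhammer (c j) k) / fact k"

lemma hweight_eq: "hweight Mb b N c t k = hcoef Mb b N c k * t ^ k"
  by (simp add: hweight_def hcoef_def)

definition MomF :: "nat \<Rightarrow> (nat \<Rightarrow> real) \<Rightarrow> nat \<Rightarrow> (nat \<Rightarrow> real) \<Rightarrow> nat \<Rightarrow> (nat \<Rightarrow> real) \<Rightarrow> real \<Rightarrow> real \<Rightarrow> rmat" where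
  "MomF M1 b1 N c M2 b2 u v = moment (hweight M1 b1 N c u) (hweight M2 b2 N c v)"

lemma moment_dir1:
  assumes U: "open U" and pt: "(x, y) \<in> U"
    and conv1: "\<forall>(x, y)\<in>U. \<forall>n. summable (\<lambda>k. real k ^ n * hweight M1 b1 N c x k)"
  shows "mdiff (\<lambda>t. MomF M1 b1 N c M2 b2 t y) x"
    "mscale x (mderiv (\<lambda>t. MomF M1 b1 N c M2 b2 t y) x)
      = (\<lambda>n m. if even m then MomF M1 b1 N c M2 b2 x y (Suc n) m else 0)"
proof -
  define V where "V = (\<lambda>s. (s, y)) -` U"
  have oV: "open V" unfolding V_def by (rule continuous_open_vimage[OF U]) (intro continuous_intros)
  have xV: "x \<in> V" using pt by (simp add: V_def)
  define a where "a = hcoef M1 b1 N c"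
  have smV: "\<forall>s\<in>V. \<forall>n. summable (\<lambda>k. real k ^ n * (a k * s ^ k))"
    using conv1 by (auto simp: V_def a_def hweight_eq)
  have D: "\<exists>D. ((\<lambda>t. MomF M1 b1 N c M2 b2 t y n m) has_field_derivative D) (at x)
      \<and> x * D = (if even m then MomF M1 b1 N c M2 b2 x y (Suc n) m else 0)" for n m
  proof (cases "even m")
    case True
    obtain D where "((\<lambda>t. \<Sum>k. real k ^ (n + m div 2) * (a k * t ^ k)) has_field_derivative D) (at x)"
        "x * D = (\<Sum>k. real k ^ Suc (n + m div 2) * (a k * x ^ k))"
      using series_deriv[OF oV xV smV] by blast
    moreover have "(\<lambda>t. MomF M1 b1 N c M2 b2 t y n m) = (\<lambda>t. \<Sum>k. real k ^ (n + m div 2) * (a k * t ^ k))"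
      using True by (simp add: MomF_def moment_def a_def hweight_eq)
    moreover have "MomF M1 b1 N c M2 b2 x y (Suc n) m = (\<Sum>k. real k ^ Suc (n + m div 2) * (a k * x ^ k))"
      using True by (simp add: MomF_def moment_def a_def hweight_eq)
    ultimately show ?thesis using True by auto
  next
    case False
    have "(\<lambda>t. MomF M1 b1 N c M2 b2 t y n m) = (\<lambda>t. MomF M1 b1 N c M2 b2 x y n m)"
      using False by (simp add: MomF_def moment_def)
    then have "((\<lambda>t. MomF M1 b1 N c M2 b2 t y n m) has_field_derivative 0) (at x)" by simp
    then show ?thesis using False by auto
  qed
  then obtain DD where DD: "\<And>n m. ((\<lambda>t. MomF M1 b1 N c M2 b2 t y n m) has_field_derivative DD n m) (at x)
      \<and> x * DD n m = (if even m then MomF M1 b1 N c M2 b2 x y (Suc n) m else 0)" by metis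
  show "mdiff (\<lambda>t. MomF M1 b1 N c M2 b2 t y) x" using DD by (intro mdiffI) blast
  have "mderiv (\<lambda>t. MomF M1 b1 N c M2 b2 t y) x = DD" using DD by (intro mdiffI) blast
  then show "mscale x (mderiv (\<lambda>t. MomF M1 b1 N c M2 b2 t y) x)
      = (\<lambda>n m. if even m then MomF M1 b1 N c M2 b2 x y (Suc n) m else 0)"
    using DD unfolding mscale_def by (intro ext) simp
qed

lemma moment_dir2:
  assumes U: "open U" and pt: "(x, y) \<in> U"
    and conv2: "\<forall>(x, y)\<in>U. \<forall>n. summable (\<lambda>k. real k ^ n * hweight M2 b2 N c y k)"
  shows "mdiff (\<lambda>t. MomF M1 b1 N c M2 b2 x t) y"
    "mscale y (mderiv (\<lambda>t. MomF M1 b1 N c M2 b2 x t) y)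
      = (\<lambda>n m. if even m then 0 else MomF M1 b1 N c M2 b2 x y (Suc n) m)"
proof -
  define V where "V = (\<lambda>s. (x, s)) -` U"
  have oV: "open V" unfolding V_def by (rule continuous_open_vimage[OF U]) (intro continuous_intros)
  have xV: "y \<in> V" using pt by (simp add: V_def)
  define a where "a = hcoef M2 b2 N c"
  have smV: "\<forall>s\<in>V. \<forall>n. summable (\<lambda>k. real k ^ n * (a k * s ^ k))"
    using conv2 by (auto simp: V_def a_def hweight_eq)
  have D: "\<exists>D. ((\<lambda>t. MomF M1 b1 N c M2 b2 x t n m) has_field_derivative D) (at y)
      \<and> y * D = (if even m then 0 else MomF M1 b1 N c M2 b2 x y (Suc n) m)" for n m
  proof (cases "even m")
    case False
    obtain D where "((\<lambda>t. \<Sum>k. real k ^ (n + m div 2) * (a k * t ^ k)) has_field_derivative D) (at y)"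
        "y * D = (\<Sum>k. real k ^ Suc (n + m div 2) * (a k * y ^ k))"
      using series_deriv[OF oV xV smV] by blast
    moreover have "(\<lambda>t. MomF M1 b1 N c M2 b2 x t n m) = (\<lambda>t. \<Sum>k. real k ^ (n + m div 2) * (a k * t ^ k))"
      using False by (simp add: MomF_def moment_def a_def hweight_eq)
    moreover have "MomF M1 b1 N c M2 b2 x y (Suc n) m = (\<Sum>k. real k ^ Suc (n + m div 2) * (a k * y ^ k))"
      using False by (simp add: MomF_def moment_def a_def hweight_eq)
    ultimately show ?thesis using False by auto
  next
    case True
    have "(\<lambda>t. MomF M1 b1 N c M2 b2 x t n m) = (\<lambda>t. MomF M1 b1 N c M2 b2 x y n m)"
      using True by (simp add: MomF_def moment_def)
    then have "((\<lambda>t. MomF M1 b1 N c M2 b2 x t n m) has_field_derivative 0) (at y)" by simp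
    then show ?thesis using True by auto
  qed
  then obtain DD where DD: "\<And>n m. ((\<lambda>t. MomF M1 b1 N c M2 b2 x t n m) has_field_derivative DD n m) (at y)
      \<and> y * DD n m = (if even m then 0 else MomF M1 b1 N c M2 b2 x y (Suc n) m)" by metis
  show "mdiff (\<lambda>t. MomF M1 b1 N c M2 b2 x t) y" using DD by (intro mdiffI) blast
  have "mderiv (\<lambda>t. MomF M1 b1 N c M2 b2 x t) y = DD" using DD by (intro mdiffI) blast
  then show "mscale y (mderiv (\<lambda>t. MomF M1 b1 N c M2 b2 x t) y)
      = (\<lambda>n m. if even m then 0 else MomF M1 b1 N c M2 b2 x y (Suc n) m)"
    using DD unfolding mscale_def by (intro ext) simp
qed

lemma ltinv_cancel1[simp]: "lower_unitri S \<Longrightarrow> mmult (ltinv S) (mmult S X) = X"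
  by (simp add: assoc_rr[symmetric] ltinv_props(1-3))
lemma ltinv_cancel2[simp]: "lower_unitri S \<Longrightarrow> mmult S (mmult (ltinv S) X) = X"
  by (simp add: assoc_rr[symmetric] ltinv_props(1-3))
lemma ltinv_l[simp]: "lower_unitri S \<Longrightarrow> mmult (ltinv S) S = idm" by (simp add: ltinv_props(1-3))
lemma ltinv_r[simp]: "lower_unitri S \<Longrightarrow> mmult S (ltinv S) = idm" by (simp add: ltinv_props(1-3))

lemma mmult_zero_right[simp]: "mmult A (\<lambda>i j. 0) = (\<lambda>i j. 0)" unfolding mmult_def by simp
lemma madd_zero_right[simp]: "madd A (\<lambda>i j. 0) = A" unfolding madd_def by simp

lemma mtrans_idm[simp]: "mtrans idm = idm" by (auto simp: mtrans_def idm_def intro!: ext)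

lemma SMSt:
  assumes S: "lower_unitri S" and St: "lower_unitri St" and H: "diagonal H"
  shows "mmult (mmult S (mmult (mmult (ltinv S) H) (mtrans (ltinv St)))) (mtrans St) = H"
proof -
  have c1: "cf (mtrans (ltinv St))" "cf (mtrans St)" using S St by auto
  have "mmult S (mmult (mmult (ltinv S) H) (mtrans (ltinv St))) = mmult H (mtrans (ltinv St))"
    using S H by (simp add: assoc_rr[symmetric])
  then have "mmult (mmult S (mmult (mmult (ltinv S) H) (mtrans (ltinv St)))) (mtrans St)
     = mmult H (mmult (mtrans (ltinv St)) (mtrans St))" using c1 by (simp add: assoc_cc)
  also have "\<dots> = H" using St by (simp add: mtrans_mmult[symmetric] ltinv_props(1-3))
  finally show ?thesis .
qed


lemma dir_main:
  fixes Sf Stf Hf Mf :: "real \<Rightarrow> rmat"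
  assumes ev: "\<forall>\<^sub>F t in nhds t0. lower_unitri (Sf t) \<and> lower_unitri (Stf t) \<and> diagonal (Hf t)
      \<and> (\<forall>k. Hf t k k \<noteq> 0) \<and> Mf t = mmult (mmult (ltinv (Sf t)) (Hf t)) (mtrans (ltinv (Stf t)))"
    and dM: "mdiff Mf t0"
  shows "mdiff Sf t0" "mdiff Stf t0" "mdiff Hf t0"
    "madd (madd (mmult (mmult (mderiv Sf t0) (ltinv (Sf t0))) (Hf t0))
                (mmult (mmult (Sf t0) (mderiv Mf t0)) (mtrans (Stf t0))))
          (mmult (Hf t0) (mtrans (mmult (mderiv Stf t0) (ltinv (Stf t0))))) = mderiv Hf t0"
proof -
  have ev2: "\<forall>\<^sub>F t in nhds t0. lower_unitri (ltinv (Sf t)) \<and> lower_unitri (ltinv (Stf t)) \<and> diagonal (Hf t)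
      \<and> (\<forall>k. Hf t k k \<noteq> 0) \<and> Mf t = mmult (mmult (ltinv (Sf t)) (Hf t)) (mtrans (ltinv (Stf t)))"
    using ev by (rule eventually_mono) (auto simp: ltinv_props(1-3))
  have D: "mdiff (\<lambda>t. ltinv (Sf t)) t0" "mdiff (\<lambda>t. ltinv (Stf t)) t0" "mdiff Hf t0"
    using doolittle[OF ev2 dM] by auto
  then show dH: "mdiff Hf t0" by simp
  have eS: "\<forall>\<^sub>F t in nhds t0. Sf t = ltinv (ltinv (Sf t))"
    using ev by (rule eventually_mono) (auto simp: ltinv_ltinv)
  have eSt: "\<forall>\<^sub>F t in nhds t0. Stf t = ltinv (ltinv (Stf t))"
    using ev by (rule eventually_mono) (auto simp: ltinv_ltinv)
  have l1: "\<forall>\<^sub>F t in nhds t0. lower_unitri (ltinv (Sf t))" using ev2 by (rule eventually_mono) auto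
  have l2: "\<forall>\<^sub>F t in nhds t0. lower_unitri (ltinv (Stf t))" using ev2 by (rule eventually_mono) auto
  show dS: "mdiff Sf t0" using mdiff_ev(1)[OF eS mdiff_ltinv(1)[OF l1 D(1)]] .
  show dSt: "mdiff Stf t0" using mdiff_ev(1)[OF eSt mdiff_ltinv(1)[OF l2 D(2)]] .
  have at0: "lower_unitri (Sf t0)" "lower_unitri (Stf t0)" "diagonal (Hf t0)"
    "Mf t0 = mmult (mmult (ltinv (Sf t0)) (Hf t0)) (mtrans (ltinv (Stf t0)))"
    using ev_at[OF ev] by auto
  let ?S = "Sf t0" let ?St = "Stf t0" let ?H = "Hf t0" let ?M = "Mf t0"
  let ?A = "ltinv ?S" let ?C = "ltinv ?St"
  let ?S' = "mderiv Sf t0" let ?St' = "mderiv Stf t0" let ?M' = "mderiv Mf t0"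
  have evS: "\<forall>\<^sub>F t in nhds t0. ubw 0 (Sf t)"
    using ev by (rule eventually_mono) (auto simp: lower_unitri_def lower_tri_ubw)
  have evSt: "\<forall>\<^sub>F t in nhds t0. lbw 0 (mtrans (Stf t))"
    using ev by (rule eventually_mono) (auto simp: lower_unitri_def lower_tri_ubw)
  have rS': "rf ?S'" using ubw_ev_deriv[OF evS] rf_def by blast
  have cSt': "cf (mtrans ?St')" using lbw_ev_deriv[OF evSt] mdiff_mtrans(2)[OF dSt] cf_def by metis
  have eG: "\<forall>\<^sub>F t in nhds t0. Hf t = mmult (mmult (Sf t) (Mf t)) (mtrans (Stf t))"
    using ev by (rule eventually_mono) (auto simp: SMSt)
  have d1: "mdiff (\<lambda>t. mmult (Sf t) (Mf t)) t0"
      "mderiv (\<lambda>t. mmult (Sf t) (Mf t)) t0 = madd (mmult ?S' ?M) (mmult ?S ?M')"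
    using mdiff_mmult_r[OF evS dS dM] by auto
  have d2: "mderiv (\<lambda>t. mmult (mmult (Sf t) (Mf t)) (mtrans (Stf t))) t0
      = madd (mmult (madd (mmult ?S' ?M) (mmult ?S ?M')) (mtrans ?St)) (mmult (mmult ?S ?M) (mtrans ?St'))"
    using mdiff_mmult_c(2)[OF evSt d1(1) mdiff_mtrans(1)[OF dSt]] d1(2) mdiff_mtrans(2)[OF dSt] by simp
  have "mderiv Hf t0 = mderiv (\<lambda>t. mmult (mmult (Sf t) (Mf t)) (mtrans (Stf t))) t0"
    by (rule mdiff_ev(2)[OF eG mdiff_mmult_c(1)[OF evSt d1(1) mdiff_mtrans(1)[OF dSt]]])
  also have "\<dots> = madd (madd (mmult (mmult ?S' ?M) (mtrans ?St)) (mmult (mmult ?S ?M') (mtrans ?St)))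
       (mmult (mmult ?S ?M) (mtrans ?St'))"
    unfolding d2 using at0 by (simp add: madd_left_c)
  also have "mmult (mmult ?S' ?M) (mtrans ?St) = mmult (mmult ?S' ?A) ?H"
  proof -
    have "mmult (mmult ?S' ?M) (mtrans ?St) = mmult (mmult (mmult ?S' (mmult ?A ?H)) (mtrans ?C)) (mtrans ?St)"
      using at0 rS' by (simp add: assoc_rr)
    also have "\<dots> = mmult (mmult ?S' (mmult ?A ?H)) (mmult (mtrans ?C) (mtrans ?St))"
      using at0 by (simp add: assoc_cc)
    also have "\<dots> = mmult (mmult ?S' ?A) ?H"
      using at0 rS' by (simp add: mtrans_mmult[symmetric] assoc_rr)
    finally show ?thesis .
  qed
  also have "mmult (mmult ?S ?M) (mtrans ?St') = mmult ?H (mtrans (mmult ?St' ?C))"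
  proof -
    have "mmult ?S ?M = mmult ?H (mtrans ?C)"
      using at0 by (simp add: assoc_rr[symmetric])
    then have "mmult (mmult ?S ?M) (mtrans ?St') = mmult ?H (mmult (mtrans ?C) (mtrans ?St'))"
      using at0 cSt' by (simp add: assoc_cc)
    then show ?thesis by (simp add: mtrans_mmult)
  qed
  finally show "madd (madd (mmult (mmult ?S' ?A) ?H) (mmult (mmult ?S ?M') (mtrans ?St)))
          (mmult ?H (mtrans (mmult ?St' ?C))) = mderiv Hf t0" by simp
qed

definition Kmat :: "(nat \<Rightarrow> real) \<Rightarrow> nat \<Rightarrow> rmat" where
  "Kmat c N = mmult (ltinv pascal) (theta_mat c N Lam)"

lemma rf_K[simp,intro]: "rf (Kmat c N)"
  unfolding Kmat_def using pascal_lower by auto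

lemma Psi_eq:
  assumes S: "lower_unitri S"
  shows "Psi c N S = mmult (mmult S (Kmat c N)) (ltinv S)"
proof -
  have rS: "rf S" "rf (ltinv S)" "rf (ltinv pascal)" "rf (theta_mat c N Lam)" using S pascal_lower by auto
  have "Psi c N S = mmult (mmult (mmult S (ltinv pascal)) (ltinv S)) (mmult (mmult S (theta_mat c N Lam)) (ltinv S))"
    unfolding Psi_def Tmat_def by (simp add: theta_conj[OF S])
  also have "\<dots> = mmult (mmult S (Kmat c N)) (ltinv S)"
    using S rS by (simp add: assoc_rr Kmat_def)
  finally show ?thesis .
qed

lemma dir_psi:
  assumes ev: "\<forall>\<^sub>F t in nhds t0. lower_unitri (Sf t)" and dS: "mdiff Sf t0"
  shows "mdiff (\<lambda>t. Psi c N (Sf t)) t0"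
    "mderiv (\<lambda>t. Psi c N (Sf t)) t0 = comm (mmult (mderiv Sf t0) (ltinv (Sf t0))) (Psi c N (Sf t0))"
proof -
  let ?K = "Kmat c N"
  have eP: "\<forall>\<^sub>F t in nhds t0. Psi c N (Sf t) = mmult (mmult (Sf t) ?K) (ltinv (Sf t))"
    using ev by (rule eventually_mono) (rule Psi_eq)
  have evS: "\<forall>\<^sub>F t in nhds t0. ubw 0 (Sf t)"
    using ev by (rule eventually_mono) (auto simp: lower_unitri_def lower_tri_ubw)
  obtain w where w: "ubw w ?K" using rf_K rf_def by blast
  have evSK: "\<forall>\<^sub>F t in nhds t0. ubw (0 + w) (mmult (Sf t) ?K)"
    using evS by (rule eventually_mono) (rule ubw_mmult[OF _ w])
  have d1: "mdiff (\<lambda>t. mmult (Sf t) ?K) t0" "mderiv (\<lambda>t. mmult (Sf t) ?K) t0 = mmult (mderiv Sf t0) ?K"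
    using mdiff_mmult_r[OF evS dS mdiff_const(1)] mdiff_const(2) by auto
  have dA: "mdiff (\<lambda>t. ltinv (Sf t)) t0" by (rule mdiff_ltinv(1)[OF ev dS])
  have d2: "mdiff (\<lambda>t. mmult (mmult (Sf t) ?K) (ltinv (Sf t))) t0"
    "mderiv (\<lambda>t. mmult (mmult (Sf t) ?K) (ltinv (Sf t))) t0
      = madd (mmult (mmult (mderiv Sf t0) ?K) (ltinv (Sf t0)))
             (mmult (mmult (Sf t0) ?K) (mneg (mmult (mmult (ltinv (Sf t0)) (mderiv Sf t0)) (ltinv (Sf t0)))))"
    using mdiff_mmult_r[OF evSK d1(1) dA] d1(2) mdiff_ltinv(2)[OF ev dS] by auto
  show "mdiff (\<lambda>t. Psi c N (Sf t)) t0" by (rule mdiff_ev(1)[OF eP d2(1)])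
  have at0: "lower_unitri (Sf t0)" using ev_at[OF ev] .
  have rS': "rf (mderiv Sf t0)" using ubw_ev_deriv[OF evS] rf_def by blast
  let ?S = "Sf t0" let ?A = "ltinv ?S" let ?S' = "mderiv Sf t0"
  have "mderiv (\<lambda>t. Psi c N (Sf t)) t0 = mderiv (\<lambda>t. mmult (mmult (Sf t) ?K) (ltinv (Sf t))) t0"
    by (rule mdiff_ev(2)[OF eP d2(1)])
  also have "\<dots> = msub (mmult (mmult ?S' ?A) (mmult (mmult ?S ?K) ?A)) (mmult (mmult (mmult ?S ?K) ?A) (mmult ?S' ?A))"
  proof -
    have e1: "mmult (mmult ?S' ?K) ?A = mmult (mmult ?S' ?A) (mmult (mmult ?S ?K) ?A)"
      using at0 rS' by (simp add: assoc_rr)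
    have e2: "mmult (mmult ?S ?K) (mneg (mmult (mmult ?A ?S') ?A)) = mneg (mmult (mmult (mmult ?S ?K) ?A) (mmult ?S' ?A))"
      using at0 rS' by (simp add: assoc_rr mmult_mneg_right)
    show ?thesis unfolding d2(2) e1 e2 by (simp add: madd_def msub_def mneg_def)
  qed
  also have "\<dots> = comm (mmult ?S' ?A) (Psi c N ?S)"
    unfolding comm_def Psi_eq[OF at0] ..
  finally show "mderiv (\<lambda>t. Psi c N (Sf t)) t0 = comm (mmult (mderiv Sf t0) (ltinv (Sf t0))) (Psi c N (Sf t0))" .
qed

lemma mscale_left_c: assumes "cf B" shows "mmult (mscale c A) B = mscale c (mmult A B)"
proof (intro ext)
  fix i j
  obtain w where w: "lbw w B" using assms cf_def by blast
  then show "mmult (mscale c A) B i j = mscale c (mmult A B) i j"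
    by (simp add: mscale_def mmult_lbw[of w _ j "j+w"] sum_distrib_left algebra_simps)
qed

lemma vth1_eq: "vth1 F x y = mscale x (mderiv (\<lambda>t. F t y) x)"
  unfolding vth1_def mscale_def mderiv_def ..
lemma vth2_eq: "vth2 F x y = mscale y (mderiv (\<lambda>t. F x t) y)"
  unfolding vth2_def mscale_def mderiv_def ..
lemma vth_eq: "vth F x y = madd (mscale x (mderiv (\<lambda>t. F t y) x)) (mscale y (mderiv (\<lambda>t. F x t) y))"
  unfolding vth_def vth1_eq vth2_eq ..

lemma rf_lowpart[simp,intro]: "rf (lowpart T)"
  unfolding rf_def ubw_def lowpart_def by (rule exI[of _ 0]) auto
lemma rf_uppart[simp,intro]: "rf T \<Longrightarrow> rf (uppart T)"
  unfolding rf_def ubw_def uppart_def by auto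

lemma strict_mult:
  assumes P: "\<And>i k. i \<le> k \<Longrightarrow> P i k = 0" and Q: "lower_tri Q" and ij: "i \<le> j"
  shows "mmult P Q i j = 0"
proof -
  have "mmult P Q i j = (\<Sum>k\<in>{..i}. P i k * Q k j)"
    by (rule mmult_fin) (auto simp: P)
  also have "\<dots> = 0"
  proof (rule sum.neutral, intro ballI)
    fix k assume "k \<in> {..i}"
    then show "P i k * Q k j = 0" using P[of i k] Q ij
      by (cases "k = i") (auto simp: lower_tri_def)
  qed
  finally show ?thesis .
qed

lemma lin_comm:
  assumes "rf P1" "rf P2" "rf X"
  shows "comm (madd (mscale a P1) (mscale b P2)) X = madd (mscale a (comm P1 X)) (mscale b (comm P2 X))"
  using assms
  by (simp add: comm_def madd_left_r madd_right_r mscale_left_r mscale_right_r)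
     (auto simp: madd_def mscale_def msub_def algebra_simps intro!: ext)

lemma strict_deriv:
  assumes ev: "\<forall>\<^sub>F t in nhds t0. lower_unitri (F t)" and ik: "i \<le> k"
  shows "mderiv F t0 i k = 0"
proof (cases "i = k")
  case True
  have "\<forall>\<^sub>F t in nhds t0. F t i k = 1" using ev by (rule eventually_mono) (auto simp: True lower_unitri_def)
  then show ?thesis unfolding mderiv_def by (rule deriv_ev0)
next
  case False
  have "\<forall>\<^sub>F t in nhds t0. F t i k = 0" using ev False ik by (auto elim!: eventually_mono simp: lower_unitri_def lower_tri_def)
  then show ?thesis unfolding mderiv_def by (rule deriv_ev0)
qed

lemma diag_deriv:
  assumes ev: "\<forall>\<^sub>F t in nhds t0. diagonal (F t)" and ik: "i \<noteq> k"
  shows "mderiv F t0 i k = 0"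
proof -
  have "\<forall>\<^sub>F t in nhds t0. F t i k = 0" using ev ik by (auto elim!: eventually_mono simp: diagonal_def)
  then show ?thesis unfolding mderiv_def by (rule deriv_ev0)
qed

lemma inv_deriv:
  assumes ev: "\<forall>\<^sub>F t in nhds t0. diagonal (F t) \<and> (\<forall>k. F t k k \<noteq> 0)" and dF: "mdiff F t0"
  shows "mderiv (\<lambda>t. ltinv (F t)) t0 i j = (if i = j then - (mderiv F t0 i i / (F t0 i i)^2) else 0)"
proof (cases "i = j")
  case True
  have e: "\<forall>\<^sub>F t in nhds t0. ltinv (F t) i j = inverse (F t i i)"
    using ev by (rule eventually_mono) (auto simp: ltinv_diag dinv_def True divide_inverse)
  have F0: "F t0 i i \<noteq> 0" using ev_at[OF ev] by auto
  have "((\<lambda>t. inverse (F t i i)) has_field_derivative - (mderiv F t0 i i * inverse (F t0 i i ^ 2))) (at t0)"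
    using DERIV_inverse_fun[OF mdiff_D[OF dF] F0] by (simp add: power2_eq_square)
  then have "((\<lambda>t. ltinv (F t) i j) has_field_derivative - (mderiv F t0 i i * inverse (F t0 i i ^ 2))) (at t0)"
    using DERIV_cong_ev[OF refl e refl] by simp
  then show ?thesis unfolding mderiv_def using True by (simp add: DERIV_imp_deriv divide_inverse)
next
  case False
  have "\<forall>\<^sub>F t in nhds t0. ltinv (F t) i j = 0"
    using ev by (rule eventually_mono) (auto simp: ltinv_diag dinv_def False)
  then show ?thesis unfolding mderiv_def using False by (simp add: deriv_ev0)
qed

lemma K_Lam: "mmult (Kmat c N) Lam = madd (mmult Lam (Kmat c N)) (Kmat c N)"
proof -
  have r: "rf (ltinv pascal)" "rf (theta_mat c N Lam)" using pascal_lower by auto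
  have "mmult (Kmat c N) Lam = mmult (ltinv pascal) (mmult Lam (theta_mat c N Lam))"
    using r by (simp add: Kmat_def assoc_rr theta_Lam_comm)
  also have "\<dots> = mmult (mmult (madd Lam idm) (ltinv pascal)) (theta_mat c N Lam)"
    using r by (simp add: assoc_rr[symmetric] Linv_Lam)
  also have "\<dots> = madd (mmult Lam (Kmat c N)) (Kmat c N)"
    using r by (simp add: madd_left_r assoc_rr Kmat_def)
  finally show ?thesis .
qed

lemma Psi_T:
  assumes S: "lower_unitri S"
  shows "msub (mmult (Psi c N S) (Tmat S)) (mmult (Tmat S) (Psi c N S)) = Psi c N S"
proof -
  let ?K = "Kmat c N" let ?A = "ltinv S"
  have r: "rf S" "rf ?A" using S by auto
  have "mmult (Psi c N S) (Tmat S) = mmult S (mmult (mmult ?K Lam) ?A)"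
    using S r by (simp add: Psi_eq Tmat_def assoc_rr)
  also have "\<dots> = madd (mmult S (mmult Lam (mmult ?K ?A))) (mmult S (mmult ?K ?A))"
    using S r by (simp add: K_Lam madd_left_r madd_right_r assoc_rr)
  also have "mmult S (mmult Lam (mmult ?K ?A)) = mmult (Tmat S) (Psi c N S)"
    using S r by (simp add: Psi_eq Tmat_def assoc_rr)
  also have "mmult S (mmult ?K ?A) = Psi c N S"
    using S r by (simp add: Psi_eq assoc_rr)
  finally show ?thesis by (auto simp: msub_def madd_def intro!: ext)
qed

lemma rf_Psi[simp,intro]: "lower_unitri S \<Longrightarrow> rf (Psi c N S)"
  by (simp add: Psi_eq)
lemma rf_Tmat[simp,intro]: "lower_unitri S \<Longrightarrow> rf (Tmat S)"
  by (simp add: Tmat_def)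

theorem mainTheorem15:
  fixes N M1 M2 :: nat
    and c b1 b2 :: "nat \<Rightarrow> real"
    and U :: "(real \<times> real) set"
    and S St H :: "real \<Rightarrow> real \<Rightarrow> rmat"
  assumes c_ok: "\<forall>j<N. \<forall>k. pochhammer (c j) k \<noteq> 0"
    and U_open: "open U"
    and conv1: "\<forall>(x, y)\<in>U. \<forall>n. summable (\<lambda>k. real k ^ n * hweight M1 b1 N c x k)"
    and conv2: "\<forall>(x, y)\<in>U. \<forall>n. summable (\<lambda>k. real k ^ n * hweight M2 b2 N c y k)"
    and minors: "\<forall>(x, y)\<in>U. \<forall>n. lead_minor (moment (hweight M1 b1 N c x) (hweight M2 b2 N c y)) n \<noteq> 0"
    and fact_S: "\<forall>(x, y)\<in>U. lower_unitri (S x y)"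
    and fact_St: "\<forall>(x, y)\<in>U. lower_unitri (St x y)"
    and fact_H: "\<forall>(x, y)\<in>U. diagonal (H x y)"
    and GB: "\<forall>(x, y)\<in>U. moment (hweight M1 b1 N c x) (hweight M2 b2 N c y)
               = mmult (mmult (ltinv (S x y)) (H x y)) (mtrans (ltinv (St x y)))"
    and pt: "(x, y) \<in> U"
  shows
    "let PsiF = (\<lambda>u v. Psi c N (S u v));
         Ps = PsiF x y;
         T = Tmat (S x y);
         Tm = lowpart T;
         Tp = uppart T;
         phi = mmult (vth S x y) (ltinv (S x y));
         Hinv = ltinv (H x y);
         phit1 = mmult (vth1 St x y) (ltinv (St x y));
         phit2 = mmult (vth2 St x y) (ltinv (St x y));
         mu1 = madd (mmult (vth1 (\<lambda>u v. ltinv (H u v)) x y) (H x y)) (mmult (mmult Hinv phit1) (H x y));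
         mu2 = madd (mmult (vth2 (\<lambda>u v. ltinv (H u v)) x y) (H x y)) (mmult (mmult Hinv phit2) (H x y));
         mu = madd mu1 mu2
     in vth PsiF x y = comm phi Ps
      \<and> comm phi Ps = comm (mneg Tm) Ps
      \<and> comm (mneg Tm) Ps = comm Ps Tm
      \<and> vth (\<lambda>u v. mtrans (PsiF u v)) x y = madd (mtrans Ps) (comm mu (mtrans Ps))
      \<and> madd (mtrans Ps) (comm mu (mtrans Ps)) = madd (mtrans Ps) (comm (mneg (mtrans Tp)) (mtrans Ps))"
proof -
  define Mom where "Mom = MomF M1 b1 N c M2 b2"
  have MomE: "Mom u v = moment (hweight M1 b1 N c u) (hweight M2 b2 N c v)" for u v
    by (simp add: Mom_def MomF_def)
  define P where "P u v \<longleftrightarrow> lower_unitri (S u v) \<and> lower_unitri (St u v) \<and> diagonal (H u v)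
      \<and> (\<forall>k. H u v k k \<noteq> 0) \<and> Mom u v = mmult (mmult (ltinv (S u v)) (H u v)) (mtrans (ltinv (St u v)))" for u v
  have PU: "P u v" if uv: "(u, v) \<in> U" for u v
  proof -
    have a: "lower_unitri (S u v)" "lower_unitri (St u v)" "diagonal (H u v)"
      using fact_S fact_St fact_H uv by auto
    have g: "Mom u v = mmult (mmult (ltinv (S u v)) (H u v)) (mtrans (ltinv (St u v)))"
      using GB uv by (auto simp: MomE)
    have mn: "\<forall>n. lead_minor (mmult (mmult (ltinv (S u v)) (H u v)) (mtrans (ltinv (St u v)))) n \<noteq> 0"
      using minors uv g by (auto simp: MomE)
    have "H u v k k \<noteq> 0" for k
      by (rule H_nonzero[OF ltinv_props(1)[OF a(1)] ltinv_props(1)[OF a(2)] a(3) mn])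
    then show ?thesis using a g by (simp add: P_def)
  qed
  have ev1: "\<forall>\<^sub>F t in nhds x. P t y"
  proof -
    have "open ((\<lambda>s. (s, y)) -` U)" by (rule continuous_open_vimage[OF U_open]) (intro continuous_intros)
    then have "\<forall>\<^sub>F t in nhds x. t \<in> (\<lambda>s. (s, y)) -` U" by (rule eventually_nhds_in_open) (simp add: pt)
    then show ?thesis by (rule eventually_mono) (simp add: PU)
  qed
  have ev2: "\<forall>\<^sub>F t in nhds y. P x t"
  proof -
    have "open ((\<lambda>s. (x, s)) -` U)" by (rule continuous_open_vimage[OF U_open]) (intro continuous_intros)
    then have "\<forall>\<^sub>F t in nhds y. t \<in> (\<lambda>s. (x, s)) -` U" by (rule eventually_nhds_in_open) (simp add: pt)
    then show ?thesis by (rule eventually_mono) (simp add: PU)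
  qed
  have ev1': "\<forall>\<^sub>F t in nhds x. lower_unitri (S t y) \<and> lower_unitri (St t y) \<and> diagonal (H t y)
      \<and> (\<forall>k. H t y k k \<noteq> 0) \<and> Mom t y = mmult (mmult (ltinv (S t y)) (H t y)) (mtrans (ltinv (St t y)))"
    using ev1 unfolding P_def .
  have ev2': "\<forall>\<^sub>F t in nhds y. lower_unitri (S x t) \<and> lower_unitri (St x t) \<and> diagonal (H x t)
      \<and> (\<forall>k. H x t k k \<noteq> 0) \<and> Mom x t = mmult (mmult (ltinv (S x t)) (H x t)) (mtrans (ltinv (St x t)))"
    using ev2 unfolding P_def .
  have dM1: "mdiff (\<lambda>t. Mom t y) x" unfolding Mom_def by (rule moment_dir1(1)[OF U_open pt conv1])
  have dM2: "mdiff (\<lambda>t. Mom x t) y" unfolding Mom_def by (rule moment_dir2(1)[OF U_open pt conv2])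
  note D1 = dir_main[OF ev1' dM1]
  note D2 = dir_main[OF ev2' dM2]
  have evS1: "\<forall>\<^sub>F t in nhds x. lower_unitri (S t y)" using ev1' by (rule eventually_mono) simp
  have evS2: "\<forall>\<^sub>F t in nhds y. lower_unitri (S x t)" using ev2' by (rule eventually_mono) simp
  have evSt1: "\<forall>\<^sub>F t in nhds x. lower_unitri (St t y)" using ev1' by (rule eventually_mono) simp
  have evSt2: "\<forall>\<^sub>F t in nhds y. lower_unitri (St x t)" using ev2' by (rule eventually_mono) simp
  have evH1: "\<forall>\<^sub>F t in nhds x. diagonal (H t y) \<and> (\<forall>k. H t y k k \<noteq> 0)" using ev1' by (rule eventually_mono) simp
  have evH2: "\<forall>\<^sub>F t in nhds y. diagonal (H x t) \<and> (\<forall>k. H x t k k \<noteq> 0)" using ev2' by (rule eventually_mono) simp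
  have evHd1: "\<forall>\<^sub>F t in nhds x. diagonal (H t y)" using ev1' by (rule eventually_mono) simp
  have evHd2: "\<forall>\<^sub>F t in nhds y. diagonal (H x t)" using ev2' by (rule eventually_mono) simp
  have P0: "P x y" using PU[OF pt] .
  define S0 where "S0 = S x y"
  define St0 where "St0 = St x y"
  define H0 where "H0 = H x y"
  define Mo where "Mo = Mom x y"
  define A where "A = ltinv S0"
  define C where "C = ltinv St0"
  define S1 where "S1 = mderiv (\<lambda>t. S t y) x"
  define S2 where "S2 = mderiv (\<lambda>t. S x t) y"
  define St1 where "St1 = mderiv (\<lambda>t. St t y) x"
  define St2 where "St2 = mderiv (\<lambda>t. St x t) y"
  define H1 where "H1 = mderiv (\<lambda>t. H t y) x"
  define H2 where "H2 = mderiv (\<lambda>t. H x t) y"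
  define Mo1 where "Mo1 = mderiv (\<lambda>t. Mom t y) x"
  define Mo2 where "Mo2 = mderiv (\<lambda>t. Mom x t) y"
  define p1 where "p1 = mmult S1 A"
  define p2 where "p2 = mmult S2 A"
  define q1 where "q1 = mmult St1 C"
  define q2 where "q2 = mmult St2 C"
  define T where "T = Tmat S0"
  define Ps where "Ps = Psi c N S0"
  have S0: "lower_unitri S0" "lower_unitri St0" "diagonal H0" "\<And>k. H0 k k \<noteq> 0"
    "Mo = mmult (mmult A H0) (mtrans C)"
    using P0 unfolding P_def S0_def St0_def H0_def Mo_def A_def C_def by auto
  have lA: "lower_tri A" "lower_tri C" using ltinv_props(1)[OF S0(1)] ltinv_props(1)[OF S0(2)]
    unfolding A_def C_def lower_unitri_def by auto
  have ID1: "madd (madd (mmult p1 H0) (mmult (mmult S0 Mo1) (mtrans St0))) (mmult H0 (mtrans q1)) = H1"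
    using D1(4) unfolding p1_def q1_def S1_def St1_def A_def C_def S0_def St0_def H0_def Mo1_def H1_def .
  have ID2: "madd (madd (mmult p2 H0) (mmult (mmult S0 Mo2) (mtrans St0))) (mmult H0 (mtrans q2)) = H2"
    using D2(4) unfolding p2_def q2_def S2_def St2_def A_def C_def S0_def St0_def H0_def Mo2_def H2_def .
  have evu1: "\<forall>\<^sub>F t in nhds x. ubw 0 (S t y)" using evS1 by (rule eventually_mono) (simp add: lower_unitri_def lower_tri_ubw)
  have evu2: "\<forall>\<^sub>F t in nhds y. ubw 0 (S x t)" using evS2 by (rule eventually_mono) (simp add: lower_unitri_def lower_tri_ubw)
  have evv1: "\<forall>\<^sub>F t in nhds x. ubw 0 (St t y)" using evSt1 by (rule eventually_mono) (simp add: lower_unitri_def lower_tri_ubw)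
  have evv2: "\<forall>\<^sub>F t in nhds y. ubw 0 (St x t)" using evSt2 by (rule eventually_mono) (simp add: lower_unitri_def lower_tri_ubw)
  have rS12: "rf S1" "rf S2" "rf St1" "rf St2"
    unfolding S1_def S2_def St1_def St2_def rf_def
    using ubw_ev_deriv[OF evu1] ubw_ev_deriv[OF evu2] ubw_ev_deriv[OF evv1] ubw_ev_deriv[OF evv2] by blast+
  have rA: "rf A" "rf C" "rf S0" "rf St0" "cf (mtrans St0)" "cf (mtrans C)" "rf H0" using lA S0 by auto
  have LM: "madd (mscale x Mo1) (mscale y Mo2) = mmult Lam Mo"
  proof -
    have a: "mscale x Mo1 = (\<lambda>n m. if even m then Mo (Suc n) m else 0)"
      using moment_dir1(2)[OF U_open pt conv1] unfolding Mo1_def Mo_def Mom_def .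
    have b: "mscale y Mo2 = (\<lambda>n m. if even m then 0 else Mo (Suc n) m)"
      using moment_dir2(2)[OF U_open pt conv2] unfolding Mo2_def Mo_def Mom_def .
    show ?thesis unfolding a b by (auto simp: madd_def Lam_row intro!: ext)
  qed
  have mid: "x * mmult (mmult S0 Mo1) (mtrans St0) i j + y * mmult (mmult S0 Mo2) (mtrans St0) i j = T i j * H0 j j" for i j
  proof -
    have "madd (mscale x (mmult (mmult S0 Mo1) (mtrans St0))) (mscale y (mmult (mmult S0 Mo2) (mtrans St0)))
        = mmult (mmult S0 (madd (mscale x Mo1) (mscale y Mo2))) (mtrans St0)"
      using rA by (simp add: madd_right_r mscale_right_r madd_left_c mscale_left_c)
    also have "\<dots> = mmult (mmult S0 (mmult Lam Mo)) (mtrans St0)" by (simp add: LM)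
    also have "mmult S0 (mmult Lam Mo) = mmult (mmult T H0) (mtrans C)"
      using rA unfolding S0(5) T_def Tmat_def A_def by (simp add: assoc_rr)
    also have "mmult (mmult (mmult T H0) (mtrans C)) (mtrans St0) = mmult T H0"
      using rA S0 unfolding C_def by (simp add: assoc_cc mtrans_mmult[symmetric])
    finally have "madd (mscale x (mmult (mmult S0 Mo1) (mtrans St0))) (mscale y (mmult (mmult S0 Mo2) (mtrans St0))) i j = mmult T H0 i j"
      by simp
    then show ?thesis by (simp add: madd_def mscale_def mmult_diag_right[OF S0(3)])
  qed
  define phi where "phi = mmult (vth S x y) (ltinv (S x y))"
  define phit where "phit = mmult (vth St x y) (ltinv (St x y))"
  define vH where "vH = vth H x y"
  have phiE: "phi i j = x * p1 i j + y * p2 i j" for i j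
  proof -
    have "phi = madd (mscale x p1) (mscale y p2)"
      unfolding phi_def vth_eq p1_def p2_def S1_def[symmetric] S2_def[symmetric] A_def S0_def
      using rS12 by (simp add: madd_left_r mscale_left_r)
    then show ?thesis by (simp add: madd_def mscale_def)
  qed
  have phitE: "phit i j = x * q1 i j + y * q2 i j" for i j
  proof -
    have "phit = madd (mscale x q1) (mscale y q2)"
      unfolding phit_def vth_eq q1_def q2_def St1_def[symmetric] St2_def[symmetric] C_def St0_def
      using rS12 by (simp add: madd_left_r mscale_left_r)
    then show ?thesis by (simp add: madd_def mscale_def)
  qed
  have vHE: "vH i j = x * H1 i j + y * H2 i j" for i j
    unfolding vH_def vth_eq H1_def H2_def by (simp add: madd_def mscale_def)
  have E: "phi i j * H0 j j + T i j * H0 j j + H0 i i * phit j i = vH i j" for i j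
  proof -
    have e1: "p1 i j * H0 j j + mmult (mmult S0 Mo1) (mtrans St0) i j + H0 i i * q1 j i = H1 i j"
      using fun_cong[OF fun_cong[OF ID1, of i], of j]
      by (simp add: madd_def mmult_diag_right[OF S0(3)] mmult_diag_left[OF S0(3)] mtrans_def)
    have e2: "p2 i j * H0 j j + mmult (mmult S0 Mo2) (mtrans St0) i j + H0 i i * q2 j i = H2 i j"
      using fun_cong[OF fun_cong[OF ID2, of i], of j]
      by (simp add: madd_def mmult_diag_right[OF S0(3)] mmult_diag_left[OF S0(3)] mtrans_def)
    show ?thesis unfolding phiE phitE vHE e1[symmetric] e2[symmetric] mid[symmetric, of i j]
      by (simp add: algebra_simps)
  qed
  have S1z: "S1 i k = 0" "S2 i k = 0" "St1 i k = 0" "St2 i k = 0" if "i \<le> k" for i k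
    unfolding S1_def S2_def St1_def St2_def
    using strict_deriv[OF evS1 that] strict_deriv[OF evS2 that] strict_deriv[OF evSt1 that] strict_deriv[OF evSt2 that]
    by auto
  have phi0: "phi i j = 0" if "i \<le> j" for i j
    unfolding phiE p1_def p2_def using strict_mult[of S1 A i j] strict_mult[of S2 A i j] S1z lA that by simp
  have phit0: "phit i j = 0" if "i \<le> j" for i j
    unfolding phitE q1_def q2_def using strict_mult[of St1 C i j] strict_mult[of St2 C i j] S1z lA that by simp
  have vH0: "vH i j = 0" if "i \<noteq> j" for i j
    unfolding vHE H1_def H2_def using diag_deriv[OF evHd1 that] diag_deriv[OF evHd2 that] by simp
  have phi_eq: "phi = mneg (lowpart T)"
  proof (intro ext)
    fix i j
    show "phi i j = mneg (lowpart T) i j"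
    proof (cases "i \<le> j")
      case True then show ?thesis by (simp add: phi0 mneg_def lowpart_def)
    next
      case False
      have "(phi i j + T i j) * H0 j j = 0" using E[of i j] phit0[of j i] vH0[of i j] False
        by (simp add: algebra_simps)
      then show ?thesis using S0(4)[of j] False by (simp add: mneg_def lowpart_def add_eq_0_iff2)
    qed
  qed
  define Hinv where "Hinv = ltinv (H x y)"
  define phit1 where "phit1 = mmult (vth1 St x y) (ltinv (St x y))"
  define phit2 where "phit2 = mmult (vth2 St x y) (ltinv (St x y))"
  define mu1 where "mu1 = madd (mmult (vth1 (\<lambda>u v. ltinv (H u v)) x y) (H x y)) (mmult (mmult Hinv phit1) (H x y))"
  define mu2 where "mu2 = madd (mmult (vth2 (\<lambda>u v. ltinv (H u v)) x y) (H x y)) (mmult (mmult Hinv phit2) (H x y))"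
  define mu where "mu = madd mu1 mu2"
  have HinvE: "Hinv = dinv H0" unfolding Hinv_def H0_def[symmetric] by (rule ltinv_diag[OF S0(3) S0(4)])
  have phit1E: "phit1 i j = x * q1 i j" for i j
    unfolding phit1_def vth1_eq q1_def St1_def[symmetric] C_def St0_def
    using rS12 by (simp add: mscale_left_r) (simp add: mscale_def)
  have phit2E: "phit2 i j = y * q2 i j" for i j
    unfolding phit2_def vth2_eq q2_def St2_def[symmetric] C_def St0_def
    using rS12 by (simp add: mscale_left_r) (simp add: mscale_def)
  have iv1: "vth1 (\<lambda>u v. ltinv (H u v)) x y i j = x * (if i = j then - (H1 i i / (H0 i i)^2) else 0)" for i j
    unfolding vth1_eq mscale_def H1_def H0_def using inv_deriv[OF evH1 D1(3)] by simp
  have iv2: "vth2 (\<lambda>u v. ltinv (H u v)) x y i j = y * (if i = j then - (H2 i i / (H0 i i)^2) else 0)" for i j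
    unfolding vth2_eq mscale_def H2_def H0_def using inv_deriv[OF evH2 D2(3)] by simp
  have dii: "dinv H0 i i = 1 / H0 i i" for i by (simp add: dinv_def)
  have muE: "mu i j = (if i = j then - (vH i i / H0 i i) else 0) + phit i j * H0 j j / H0 i i" for i j
  proof -
    have "mu i j = (x * (if i = j then - (H1 i i / (H0 i i)^2) else 0)) * H0 j j + (1 / H0 i i) * (x * q1 i j) * H0 j j
        + ((y * (if i = j then - (H2 i i / (H0 i i)^2) else 0)) * H0 j j + (1 / H0 i i) * (y * q2 i j) * H0 j j)"
      unfolding mu_def mu1_def mu2_def H0_def[symmetric]
      by (simp add: madd_def mmult_diag_right[OF S0(3)] mmult_diag_left[OF diagonal_dinv] HinvE iv1 iv2
          phit1E phit2E dii)
    also have "\<dots> = (if i = j then - (vH i i / H0 i i) else 0) + phit i j * H0 j j / H0 i i"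
      using S0(4)[of i] by (cases "i = j") (simp_all add: vHE phitE field_simps power2_eq_square)
    finally show ?thesis .
  qed
  have mu_eq: "mu = mneg (mtrans (uppart T))"
  proof (intro ext)
    fix i j
    show "mu i j = mneg (mtrans (uppart T)) i j"
    proof (cases i j rule: linorder_cases)
      case less
      then show ?thesis by (simp add: muE phit0 mneg_def mtrans_def uppart_def)
    next
      case equal
      have "T i i * H0 i i = vH i i" using E[of i i] phi0[of i i] phit0[of i i] by simp
      then show ?thesis using equal S0(4)[of i]
        by (simp add: muE phit0 mneg_def mtrans_def uppart_def field_simps)
    next
      case greater
      have "T j i * H0 i i + H0 j j * phit i j = 0" using E[of j i] phi0[of j i] vH0[of j i] greater by simp
      then have "phit i j * H0 j j = - T j i * H0 i i" by (simp add: algebra_simps add_eq_0_iff2)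
      then show ?thesis using greater S0(4)[of i]
        by (simp add: muE mneg_def mtrans_def uppart_def field_simps)
    qed
  qed
  have dP1: "mderiv (\<lambda>t. Psi c N (S t y)) x = comm p1 Ps"
    using dir_psi(2)[OF evS1 D1(1)] unfolding p1_def S1_def A_def S0_def Ps_def .
  have dP2: "mderiv (\<lambda>t. Psi c N (S x t)) y = comm p2 Ps"
    using dir_psi(2)[OF evS2 D2(1)] unfolding p2_def S2_def A_def S0_def Ps_def .
  have rP: "rf Ps" "rf p1" "rf p2" "rf T" using S0 rS12 rA unfolding Ps_def p1_def p2_def T_def by auto
  have C1: "vth (\<lambda>u v. Psi c N (S u v)) x y = comm phi Ps"
  proof -
    have "phi = madd (mscale x p1) (mscale y p2)" using phiE by (auto simp: madd_def mscale_def intro!: ext)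
    then show ?thesis unfolding vth_eq dP1 dP2 using rP by (simp add: lin_comm)
  qed
  have C2: "comm phi Ps = comm (mneg (lowpart T)) Ps" by (simp add: phi_eq)
  have C3: "comm (mneg (lowpart T)) Ps = comm Ps (lowpart T)"
    unfolding comm_def mmult_mneg_left mmult_mneg_right by (auto simp: msub_def mneg_def intro!: ext)
  have TT: "T = madd (lowpart T) (uppart T)" by (auto simp: madd_def lowpart_def uppart_def intro!: ext)
  have PT: "msub (mmult Ps T) (mmult T Ps) = Ps" unfolding Ps_def T_def by (rule Psi_T[OF S0(1)])
  have PT1: "mmult Ps T = madd (mmult Ps (lowpart T)) (mmult Ps (uppart T))"
    using rP by (subst TT) (simp add: madd_right_r)
  have PT2: "mmult T Ps = madd (mmult (lowpart T) Ps) (mmult (uppart T) Ps)"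
    using rP by (subst TT) (simp add: madd_left_r)
  have C4: "vth (\<lambda>u v. mtrans (Psi c N (S u v))) x y = madd (mtrans Ps) (comm mu (mtrans Ps))"
  proof -
    have a: "vth (\<lambda>u v. mtrans (Psi c N (S u v))) x y = mtrans (vth (\<lambda>u v. Psi c N (S u v)) x y)"
      by (simp add: vth_def vth1_def vth2_def madd_def mtrans_def)
    have b: "comm mu (mtrans Ps) = msub (mneg (mtrans (mmult Ps (uppart T)))) (mneg (mtrans (mmult (uppart T) Ps)))"
      unfolding comm_def mu_eq by (simp add: mmult_mneg_left mmult_mneg_right mtrans_mmult)
    show ?thesis
    proof (intro ext)
      fix i j
      have pt: "mmult Ps T j i - mmult T Ps j i = Ps j i" using fun_cong[OF fun_cong[OF PT, of j], of i]
        by (simp add: msub_def)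
      show "vth (\<lambda>u v. mtrans (Psi c N (S u v))) x y i j = madd (mtrans Ps) (comm mu (mtrans Ps)) i j"
        unfolding a C1 C2 C3 b using pt PT1 PT2
        by (simp add: comm_def msub_def madd_def mneg_def mtrans_def algebra_simps)
    qed
  qed
  have C5: "madd (mtrans Ps) (comm mu (mtrans Ps)) = madd (mtrans Ps) (comm (mneg (mtrans (uppart T))) (mtrans Ps))"
    by (simp add: mu_eq)
  show ?thesis
    unfolding Let_def
    using C1 C2 C3 C4 C5
    unfolding mu_def mu1_def mu2_def Hinv_def phit1_def phit2_def phi_def Ps_def T_def S0_def
    by blast
qed

end
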